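(* Let $n\in\mathbb{N}$ and let $p$ be a positive even integer. Let $A_{i_1,i_2,\dots,i_p}$, $(i_1,\dots,i_p)\in\{1,\dots,n\}^p$, be standard normal random variables. Let $g$ be a standard normal random variable, and for each $j\in\{1,\dots,p\}$ let $\mathbf{g}^{(j)}\in\mathbb{R}^{n}$ be a vector with standard normal entries and $A^{(j)}=(A^{(j)}_{i_1,\dots,i_p})_{(i_1,\dots,i_p)\in\{1,\dots,n\}^p}$ be an order-$p$ array with standard normal entries. Assume all these random variables are mutually independent. Let $\mathcal{S}^{(j)}\subseteq\mathbb{S}^n$, $1\le j\le p$, and write $\bar{\mathcal{S}}=(\mathcal{S}^{(j)})_{j=1}^p$. For $c_3>0$ define $$\varphi(p;\bar{\mathcal S},n)=\max_{\mathbf{x}^{(j)}\in\mathcal{S}^{(j)},\,1\le j\le p}\ \sum_{i_1,\dots,i_p=1}^n A_{i_1,\dots,i_p}\prod_{j=1}^p \mathbf{x}^{(j)}_{i_j},$$ $$\xi(p;\bar{\mathcal S},n,c_3)=\frac{1}{\sqrt n}\,\frac{1}{c_3}\log\Big(\mathbb{E}\, e^{c_3\varphi(p;\bar{\mathcal S},n)}\Big),$$ $$\xi_u(p;\bar{\mathcal S},n,c_3)=\frac{1}{\sqrt n}\left(-\frac{c_3}{2}(p-1)+\frac{1}{c_3}\log\Big(\mathbb{E}\, e^{c_3\max_{\mathbf{x}^{(j)}\in\mathcal S^{(j)}}\sum_{j=1}^p(\mathbf g^{(j)})^T\mathbf x^{(j)}}\Big)\right),$$ $$\xi_l(p;\bar{\mathcal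 S},n,c_3)=\frac{1}{\sqrt n}\,\frac{1}{c_3}\log\Big(\mathbb{E}\, e^{\frac{c_3}{\sqrt p}\max_{\mathbf{x}^{(j)}\in\mathcal S^{(j)}}\sum_{j=1}^p\sum_{i_1,\dots,i_p=1}^n A^{(j)}_{i_1,\dots,i_p}\prod_{k=1}^p \mathbf{x}^{(j)}_{i_k}}\Big).$$ Then for all real $c_{3,l}>0$ and $c_{3,u}>0$, $$\xi_l(p;\bar{\mathcal S},n,c_{3,l})\le \xi(p;\bar{\mathcal S},n,c_{3,l})\quad\text{and}\quad \xi(p;\bar{\mathcal S},n,c_{3,u})\le \xi_u(p;\bar{\mathcal S},n,c_{3,u}).$$
   Context: $\mathbb{S}^n=\{\mathbf x\in\mathbb R^n:\|\mathbf x\|_2=1\}$ denotes the unit sphere in $\mathbb R^n$. For a vector $\mathbf x$, $\mathbf x_i$ denotes its $i$-th coordinate. All maxima over the sets $\mathcal S^{(j)}$ are taken jointly over $(\mathbf x^{(1)},\dots,\mathbf x^{(p)})\in\mathcal S^{(1)}\times\cdots\times\mathcal S^{(p)}$. *)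

theory Defs
  imports "HOL-Probability.Probability"
begin

text \<open>Conventions: coordinates are indexed 0-based by i < n; the p factors by j < p.
  Vectors in R^n are functions nat => real vanishing outside {..<n}.
  Multi-indices (i_1,...,i_p) are lists of length p with entries < n.\<close>

definition unit_sphere :: "nat \<Rightarrow> (nat \<Rightarrow> real) set" where
  "unit_sphere n = {x. (\<forall>i\<ge>n. x i = 0) \<and> (\<Sum>i<n. (x i)\<^sup>2) = 1}"

definition tuples :: "nat \<Rightarrow> nat \<Rightarrow> nat list set" where
  "tuples n p = {is. length is = p \<and> set is \<subseteq> {..<n}}"

definition gauss :: "'i set \<Rightarrow> ('i \<Rightarrow> real) measure" where
  "gauss I = PiM I (\<lambda>_. density lborel std_normal_density)"

definition phi :: "nat \<Rightarrow> nat \<Rightarrow> (nat \<Rightarrow> (nat \<Rightarrow> real) set) \<Rightarrow> (nat list \<Rightarrow> real) \<Rightarrow> real" where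
  "phi p n S A = (SUP xs \<in> Pi\<^sub>E {..<p} S.
      \<Sum>is\<in>tuples n p. A is * (\<Prod>j<p. xs j (is ! j)))"

definition xi :: "nat \<Rightarrow> (nat \<Rightarrow> (nat \<Rightarrow> real) set) \<Rightarrow> nat \<Rightarrow> real \<Rightarrow> real" where
  "xi p S n c = 1 / sqrt n * (1 / c * ln (\<integral>A. exp (c * phi p n S A) \<partial>gauss (tuples n p)))"

text \<open>G (j,i) is the i-th entry of g^(j).\<close>
definition xi_u :: "nat \<Rightarrow> (nat \<Rightarrow> (nat \<Rightarrow> real) set) \<Rightarrow> nat \<Rightarrow> real \<Rightarrow> real" where
  "xi_u p S n c = 1 / sqrt n * (- c / 2 * (real p - 1) + 1 / c * ln
     (\<integral>G. exp (c * (SUP xs \<in> Pi\<^sub>E {..<p} S. \<Sum>j<p. \<Sum>i<n. G (j, i) * xs j i))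
      \<partial>gauss ({..<p} \<times> {..<n})))"

text \<open>B (j,is) is the entry A^(j)_is.\<close>
definition xi_l :: "nat \<Rightarrow> (nat \<Rightarrow> (nat \<Rightarrow> real) set) \<Rightarrow> nat \<Rightarrow> real \<Rightarrow> real" where
  "xi_l p S n c = 1 / sqrt n * (1 / c * ln
     (\<integral>B. exp (c / sqrt p * (SUP xs \<in> Pi\<^sub>E {..<p} S.
          \<Sum>j<p. \<Sum>is\<in>tuples n p. B (j, is) * (\<Prod>k<p. xs j (is ! k))))
      \<partial>gauss ({..<p} \<times> tuples n p)))"

end

theory Submission
  imports Defs
begin


lemma std_exp_bound:
  fixes K y :: real
  shows "std_normal_density y * exp (K * \<bar>y\<bar>) \<le> exp (K\<^sup>2) * sqrt 2 * normal_density 0 (sqrt 2) y"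
proof -
  have k: "K * \<bar>y\<bar> - y\<^sup>2 / 2 \<le> K\<^sup>2 - y\<^sup>2/4"
  proof -
    have "0 \<le> (K - \<bar>y\<bar>/2)\<^sup>2" by simp
    then show ?thesis by (simp add: power2_eq_square algebra_simps)
  qed
  have e: "exp (K * \<bar>y\<bar> - y\<^sup>2 / 2) = exp (K * \<bar>y\<bar>) * exp (- (y\<^sup>2) / 2)"
    by (simp add: exp_add[symmetric])
  have "std_normal_density y * exp (K * \<bar>y\<bar>) = exp (K * \<bar>y\<bar> - y\<^sup>2 / 2) / sqrt (2*pi)"
    unfolding e by (simp add: normal_density_def)
  also have "\<dots> \<le> exp (K\<^sup>2 - y\<^sup>2/4) / sqrt (2*pi)"
    using k by (intro divide_right_mono) auto
  also have "\<dots> = exp (K\<^sup>2) * sqrt 2 * normal_density 0 (sqrt 2) y"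
  proof -
    have e2: "exp (K\<^sup>2 - y\<^sup>2/4) = exp (K\<^sup>2) * exp (-(y\<^sup>2/4))"
      by (simp add: exp_add[symmetric])
    have s2: "sqrt 2 * sqrt 2 = (2::real)" by simp
    show ?thesis unfolding e2 by (simp add: normal_density_def real_sqrt_mult field_simps s2)
  qed
  finally show ?thesis .
qed

lemma integrable_std_exp: "integrable lborel (\<lambda>y. std_normal_density y * exp (K * \<bar>y\<bar>))"
proof (rule Bochner_Integration.integrable_bound)
  show "integrable lborel (\<lambda>y. exp (K\<^sup>2) * sqrt 2 * normal_density 0 (sqrt 2) y)"
    by (intro integrable_mult_right integrable_normal_density) simp
  show "AE y in lborel. norm (std_normal_density y * exp (K * \<bar>y\<bar>)) \<le> norm (exp (K\<^sup>2) * sqrt 2 * normal_density 0 (sqrt 2) y)"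
  proof (intro AE_I2)
    fix y :: real
    have "0 \<le> std_normal_density y * exp (K * \<bar>y\<bar>)" by (simp add: normal_density_nonneg)
    then show "norm (std_normal_density y * exp (K * \<bar>y\<bar>)) \<le> norm (exp (K\<^sup>2) * sqrt 2 * normal_density 0 (sqrt 2) y)"
      using std_exp_bound[of y K] by (simp add: normal_density_nonneg)
  qed
qed measurable


lemma abs_le_exp_abs: "\<bar>y::real\<bar> * exp (K * \<bar>y\<bar>) \<le> exp ((K+1) * \<bar>y\<bar>)"
proof -
  have "\<bar>y\<bar> \<le> exp \<bar>y\<bar>" using exp_ge_add_one_self[of "\<bar>y\<bar>"] by linarith
  then have "\<bar>y\<bar> * exp (K * \<bar>y\<bar>) \<le> exp \<bar>y\<bar> * exp (K * \<bar>y\<bar>)" by (intro mult_right_mono) auto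
  also have "\<dots> = exp ((K+1) * \<bar>y\<bar>)" by (simp add: exp_add[symmetric] algebra_simps)
  finally show ?thesis .
qed

lemma exp_sq_lim:
  fixes F :: "real filter"
  assumes "filterlim (\<lambda>y. y\<^sup>2) at_top F"
  shows "((\<lambda>y::real. exp (K\<^sup>2 - y\<^sup>2/4)) \<longlongrightarrow> 0) F"
proof -
  have "filterlim (\<lambda>y. (1/4) * y\<^sup>2) at_top F"
    by (rule filterlim_tendsto_pos_mult_at_top[OF tendsto_const _ assms]) simp
  then have "filterlim (\<lambda>y. (- K\<^sup>2) + (1/4) * y\<^sup>2) at_top F"
    by (rule filterlim_tendsto_add_at_top[OF tendsto_const])
  then have "filterlim (\<lambda>y. K\<^sup>2 - y\<^sup>2/4) at_bot F"
    by (subst filterlim_uminus_at_bot) simp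
  then show ?thesis by (rule filterlim_compose[OF exp_at_bot])
qed

lemma std_ibp:
  fixes g g' :: "real \<Rightarrow> real" and C K :: real
  assumes d: "\<And>y. (g has_real_derivative g' y) (at y)"
    and c: "\<And>y. isCont g' y"
    and bg: "\<And>y. \<bar>g y\<bar> \<le> C * exp (K * \<bar>y\<bar>)"
    and bg': "\<And>y. \<bar>g' y\<bar> \<le> C * exp (K * \<bar>y\<bar>)"
  shows "(\<integral>y. y * g y \<partial>density lborel std_normal_density) = (\<integral>y. g' y \<partial>density lborel std_normal_density)"
proof -
  let ?p = "std_normal_density"
  have "0 \<le> C * exp (K * \<bar>0\<bar>)"
    using bg[of 0] abs_ge_zero order_trans by blast
  then have C0: "0 \<le> C" by simp
  have dphi: "\<And>y. (?p has_real_derivative (- y * ?p y)) (at y)"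
    unfolding normal_density_def
    by (auto intro!: derivative_eq_intros simp: field_simps power2_eq_square)
  have contg: "continuous_on UNIV g"
    using d by (meson DERIV_isCont continuous_at_imp_continuous_on)
  have contg': "continuous_on UNIV g'"
    using c by (simp add: continuous_at_imp_continuous_on)
  have mg[measurable]: "g \<in> borel_measurable borel" using contg by (simp add: borel_measurable_continuous_onI)
  have mg'[measurable]: "g' \<in> borel_measurable borel" using contg' by (simp add: borel_measurable_continuous_onI)
  have i1: "integrable lborel (\<lambda>y. ?p y * g' y)"
  proof (rule Bochner_Integration.integrable_bound)
    show "integrable lborel (\<lambda>y. C * (?p y * exp (K * \<bar>y\<bar>)))"
      using integrable_std_exp by simp
    show "AE y in lborel. norm (?p y * g' y) \<le> norm (C * (?p y * exp (K * \<bar>y\<bar>)))"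
    proof (intro AE_I2)
      fix y
      have "norm (?p y * g' y) = ?p y * \<bar>g' y\<bar>" by (simp add: abs_mult normal_density_nonneg)
      also have "\<dots> \<le> ?p y * (C * exp (K * \<bar>y\<bar>))" by (intro mult_left_mono bg') (simp add: normal_density_nonneg)
      also have "\<dots> \<le> norm (C * (?p y * exp (K * \<bar>y\<bar>)))" using C0 by (simp add: normal_density_nonneg)
      finally show "norm (?p y * g' y) \<le> norm (C * (?p y * exp (K * \<bar>y\<bar>)))" .
    qed
  qed measurable
  have i2: "integrable lborel (\<lambda>y. ?p y * (y * g y))"
  proof (rule Bochner_Integration.integrable_bound)
    show "integrable lborel (\<lambda>y. C * (?p y * exp ((K+1) * \<bar>y\<bar>)))"
      using integrable_std_exp by simp
    show "AE y in lborel. norm (?p y * (y * g y)) \<le> norm (C * (?p y * exp ((K+1) * \<bar>y\<bar>)))"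
    proof (intro AE_I2)
      fix y
      have "norm (?p y * (y * g y)) = ?p y * (\<bar>y\<bar> * \<bar>g y\<bar>)" by (simp add: abs_mult normal_density_nonneg)
      also have "\<dots> \<le> ?p y * (\<bar>y\<bar> * (C * exp (K * \<bar>y\<bar>)))"
        by (intro mult_left_mono bg) (simp_all add: normal_density_nonneg)
      also have "\<dots> = C * (?p y * (\<bar>y\<bar> * exp (K * \<bar>y\<bar>)))" by simp
      also have "\<dots> \<le> C * (?p y * exp ((K+1) * \<bar>y\<bar>))"
        using C0 abs_le_exp_abs[of y K] by (intro mult_left_mono) (simp_all add: normal_density_nonneg)
      also have "\<dots> \<le> norm (C * (?p y * exp ((K+1) * \<bar>y\<bar>)))" by simp
      finally show "norm (?p y * (y * g y)) \<le> norm (C * (?p y * exp ((K+1) * \<bar>y\<bar>)))" .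
    qed
  qed measurable
  have lim0: "((\<lambda>y. exp (K\<^sup>2 - y\<^sup>2/4)) \<longlongrightarrow> 0) at_top" "((\<lambda>y. exp (K\<^sup>2 - y\<^sup>2/4)) \<longlongrightarrow> 0) at_bot"
    by (rule exp_sq_lim, rule filterlim_pow_at_top, simp, rule filterlim_ident)
       (rule exp_sq_lim, rule filterlim_pow_at_bot_even, simp, rule filterlim_ident, simp)
  have Fbound: "norm (g y * ?p y) \<le> C * exp (K\<^sup>2 - y\<^sup>2/4)" for y
  proof -
    have "norm (g y * ?p y) = \<bar>g y\<bar> * ?p y" by (simp add: abs_mult normal_density_nonneg)
    also have "\<dots> \<le> C * exp (K * \<bar>y\<bar>) * ?p y" by (intro mult_right_mono bg) (simp add: normal_density_nonneg)
    also have "\<dots> = C * (?p y * exp (K * \<bar>y\<bar>))" by simp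
    also have "\<dots> \<le> C * (exp (K\<^sup>2) * sqrt 2 * normal_density 0 (sqrt 2) y)"
      using C0 std_exp_bound[of y K] by (intro mult_left_mono) auto
    also have "exp (K\<^sup>2) * sqrt 2 * normal_density 0 (sqrt 2) y = exp (K\<^sup>2 - y\<^sup>2/4) / sqrt (2*pi)"
    proof -
      have e2: "exp (K\<^sup>2 - y\<^sup>2/4) = exp (K\<^sup>2) * exp (-(y\<^sup>2/4))"
        by (simp add: exp_add[symmetric])
      have s2: "sqrt 2 * sqrt 2 = (2::real)" by simp
      show ?thesis unfolding e2 by (simp add: normal_density_def real_sqrt_mult field_simps s2)
    qed
    also have "C * (exp (K\<^sup>2 - y\<^sup>2/4) / sqrt (2*pi)) \<le> C * exp (K\<^sup>2 - y\<^sup>2/4)"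
    proof -
      have "1 \<le> sqrt (2*pi)" using pi_gt3 by simp
      then have "exp (K\<^sup>2 - y\<^sup>2/4) / sqrt (2*pi) \<le> exp (K\<^sup>2 - y\<^sup>2/4)"
        by (simp add: divide_le_eq)
      then show ?thesis using C0 by (intro mult_left_mono) auto
    qed
    finally show ?thesis .
  qed
  have limF: "((\<lambda>y. g y * ?p y) \<longlongrightarrow> 0) at_top" "((\<lambda>y. g y * ?p y) \<longlongrightarrow> 0) at_bot"
    by (rule Lim_null_comparison[OF always_eventually[OF allI[OF Fbound]]] tendsto_mult_right_zero lim0)+
  have "(LBINT y=-\<infinity>..\<infinity>. (g' y * ?p y + g y * (- y * ?p y))) = 0 - 0"
  proof (rule interval_integral_FTC_integrable)
    show "\<And>x. ((\<lambda>y. g y * ?p y) has_vector_derivative (g' x * ?p x + g x * (- x * ?p x))) (at x)"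
      unfolding has_real_derivative_iff_has_vector_derivative[symmetric]
    proof -
      fix x
      show "((\<lambda>y. g y * ?p y) has_real_derivative (g' x * ?p x + g x * (- x * ?p x))) (at x)"
        using DERIV_mult[OF d[of x] dphi[of x]] by (simp add: algebra_simps)
    qed
    show "\<And>x. isCont (\<lambda>x. g' x * ?p x + g x * (- x * ?p x)) x"
      using c contg DERIV_isCont[OF dphi]
      by (intro continuous_intros) (auto simp: continuous_on_eq_continuous_at)
    show "set_integrable lborel (einterval (- \<infinity>) \<infinity>) (\<lambda>x. g' x * ?p x + g x * (- x * ?p x))"
      unfolding set_integrable_def einterval_eq_UNIV
      using Bochner_Integration.integrable_diff[OF i1 i2] by (simp add: algebra_simps)
    show "(((\<lambda>y. g y * ?p y) \<circ> real_of_ereal) \<longlongrightarrow> 0) (at_right (- \<infinity>))"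
      using limF unfolding ereal_tendsto_simps by simp
    show "(((\<lambda>y. g y * ?p y) \<circ> real_of_ereal) \<longlongrightarrow> 0) (at_left \<infinity>)"
      using limF unfolding ereal_tendsto_simps by simp
  qed simp
  then have "(\<integral>y. ?p y * g' y - ?p y * (y * g y) \<partial>lborel) = 0"
    by (simp add: interval_lebesgue_integral_def einterval_eq_UNIV set_lebesgue_integral_def algebra_simps)
  then have "(\<integral>y. ?p y * (y * g y) \<partial>lborel) = (\<integral>y. ?p y * g' y \<partial>lborel)"
    using i1 i2 by simp
  then show ?thesis
    by (subst (1 2) integral_density) (auto simp: normal_density_nonneg)
qed




abbreviation "SN \<equiv> density lborel std_normal_density"

lemma prob_SN: "prob_space SN"
  using prob_space_normal_density[of 1 0] by simp

lemma prob_gauss: "prob_space (gauss I)"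
  unfolding gauss_def by (intro prob_space_PiM) (simp add: prob_SN)

lemma integrable_SN_exp: "integrable SN (\<lambda>y. exp (K * \<bar>y\<bar>))"
  by (subst integrable_density) (auto simp: normal_density_nonneg integrable_std_exp)

lemma gauss_exp_integrable:
  assumes "finite I"
  shows "integrable (gauss I) (\<lambda>w. exp (K * (\<Sum>i\<in>I. \<bar>w i\<bar>)))"
proof -
  interpret product_prob_space "\<lambda>_. SN" I
    by (intro product_prob_spaceI) (simp add: prob_SN)
  have "integrable (Pi\<^sub>M I (\<lambda>_. SN)) (\<lambda>w. \<Prod>i\<in>I. exp (K * \<bar>w i\<bar>))"
    by (rule product_integrable_prod[OF assms]) (simp add: integrable_SN_exp)
  then show ?thesis
    unfolding gauss_def by (simp add: sum_distrib_left exp_sum[OF assms])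
qed

lemma gauss_bound_integrable:
  assumes "finite I" and [measurable]: "f \<in> borel_measurable (gauss I)"
    and b: "\<And>w. \<bar>f w\<bar> \<le> C * exp (K * (\<Sum>i\<in>I. \<bar>w i\<bar>))"
  shows "integrable (gauss I) f"
proof (rule Bochner_Integration.integrable_bound)
  show "integrable (gauss I) (\<lambda>w. C * exp (K * (\<Sum>i\<in>I. \<bar>w i\<bar>)))"
    using gauss_exp_integrable[OF assms(1)] by simp
  show "AE w in gauss I. norm (f w) \<le> norm (C * exp (K * (\<Sum>i\<in>I. \<bar>w i\<bar>)))"
    using b by (intro AE_I2) (metis abs_ge_self order_trans real_norm_def)
qed simp

lemma gauss_ibp:
  fixes h h' :: "('i \<Rightarrow> real) \<Rightarrow> real"
  assumes I: "finite I" "k \<in> I"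
    and mh[measurable]: "h \<in> borel_measurable (gauss I)"
    and mh'[measurable]: "h' \<in> borel_measurable (gauss I)"
    and d: "\<And>w y. ((\<lambda>y. h (w(k:=y))) has_real_derivative h' (w(k:=y))) (at y)"
    and c: "\<And>w y. isCont (\<lambda>y. h' (w(k:=y))) y"
    and b: "\<And>w. \<bar>h w\<bar> \<le> C * exp (K * (\<Sum>i\<in>I. \<bar>w i\<bar>))"
    and b': "\<And>w. \<bar>h' w\<bar> \<le> C * exp (K * (\<Sum>i\<in>I. \<bar>w i\<bar>))"
  shows "(\<integral>w. w k * h w \<partial>gauss I) = (\<integral>w. h' w \<partial>gauss I)"
proof -
  interpret product_prob_space "\<lambda>_. SN" I
    by (intro product_prob_spaceI) (simp add: prob_SN)
  have "0 \<le> C * exp (K * (\<Sum>i\<in>I. \<bar>(undefined::'i\<Rightarrow>real) i\<bar>))"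
    using b[of undefined] abs_ge_zero order_trans by blast
  then have C0: "0 \<le> C" by (simp add: zero_le_mult_iff)
  define I0 where "I0 = I - {k}"
  have II: "I = insert k I0" "k \<notin> I0" "finite I0" using I by (auto simp: I0_def)
  have sumsplit: "(\<Sum>i\<in>I. \<bar>w i\<bar>) = \<bar>w k\<bar> + (\<Sum>i\<in>I0. \<bar>w i\<bar>)" for w :: "'i \<Rightarrow> real"
    using II by simp
  have mk[measurable]: "(\<lambda>w. w k) \<in> borel_measurable (gauss I)"
    unfolding gauss_def using I by measurable
  have int1: "integrable (gauss I) (\<lambda>w. w k * h w)"
  proof (rule gauss_bound_integrable[OF I(1)])
    fix w :: "'i \<Rightarrow> real"
    have "\<bar>w k\<bar> \<le> (\<Sum>i\<in>I. \<bar>w i\<bar>)" using sumsplit[of w] II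
      by (simp add: sum_nonneg)
    then have "\<bar>w k\<bar> * exp (K * (\<Sum>i\<in>I. \<bar>w i\<bar>)) \<le> \<bar>\<Sum>i\<in>I. \<bar>w i\<bar>\<bar> * exp (K * (\<Sum>i\<in>I. \<bar>w i\<bar>))"
      by (intro mult_right_mono) auto
    also have "\<dots> \<le> exp ((K+1) * (\<Sum>i\<in>I. \<bar>w i\<bar>))"
      using abs_le_exp_abs[of "\<Sum>i\<in>I. \<bar>w i\<bar>" K] by (simp add: sum_nonneg)
    finally have e: "\<bar>w k\<bar> * exp (K * (\<Sum>i\<in>I. \<bar>w i\<bar>)) \<le> exp ((K+1) * (\<Sum>i\<in>I. \<bar>w i\<bar>))" .
    have "\<bar>w k * h w\<bar> = \<bar>w k\<bar> * \<bar>h w\<bar>" by (simp add: abs_mult)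
    also have "\<dots> \<le> \<bar>w k\<bar> * (C * exp (K * (\<Sum>i\<in>I. \<bar>w i\<bar>)))" by (intro mult_left_mono b) auto
    also have "\<dots> = C * (\<bar>w k\<bar> * exp (K * (\<Sum>i\<in>I. \<bar>w i\<bar>)))" by simp
    also have "\<dots> \<le> C * exp ((K+1) * (\<Sum>i\<in>I. \<bar>w i\<bar>))" using e C0 by (intro mult_left_mono) auto
    finally show "\<bar>w k * h w\<bar> \<le> C * exp ((K+1) * (\<Sum>i\<in>I. \<bar>w i\<bar>))" .
  qed measurable
  have int2: "integrable (gauss I) h'"
    by (rule gauss_bound_integrable[OF I(1) mh' b'])
  have "(\<integral>w. w k * h w \<partial>gauss I) = (\<integral>x. (\<integral>y. (x(k:=y)) k * h (x(k:=y)) \<partial>SN) \<partial>Pi\<^sub>M I0 (\<lambda>_. SN))"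
    using int1 unfolding gauss_def II(1) by (intro product_integral_insert II)
  also have "\<dots> = (\<integral>x. (\<integral>y. h' (x(k:=y)) \<partial>SN) \<partial>Pi\<^sub>M I0 (\<lambda>_. SN))"
  proof (rule Bochner_Integration.integral_cong[OF refl])
    fix x :: "'i \<Rightarrow> real"
    let ?C = "C * exp (K * (\<Sum>i\<in>I0. \<bar>x i\<bar>))"
    have ss: "(\<Sum>i\<in>I. \<bar>(x(k:=y)) i\<bar>) = \<bar>y\<bar> + (\<Sum>i\<in>I0. \<bar>x i\<bar>)" for y
    proof -
      have "(\<Sum>i\<in>I0. \<bar>(x(k:=y)) i\<bar>) = (\<Sum>i\<in>I0. \<bar>x i\<bar>)"
        by (rule sum.cong) (use II in auto)
      then show ?thesis using sumsplit[of "x(k:=y)"] by simp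
    qed
    have eb: "C * exp (K * (\<Sum>i\<in>I. \<bar>(x(k:=y)) i\<bar>)) = ?C * exp (K * \<bar>y\<bar>)" for y
      unfolding ss by (simp add: distrib_left exp_add)
    have "(\<integral>y. y * h (x(k:=y)) \<partial>SN) = (\<integral>y. h' (x(k:=y)) \<partial>SN)"
    proof (rule std_ibp[where C="?C" and K=K])
      show "\<And>y. ((\<lambda>y. h (x(k := y))) has_real_derivative h' (x(k := y))) (at y)" by (rule d)
      show "\<And>y. isCont (\<lambda>y. h' (x(k := y))) y" by (rule c)
      show "\<And>y. \<bar>h (x(k := y))\<bar> \<le> ?C * exp (K * \<bar>y\<bar>)" using b eb by metis
      show "\<And>y. \<bar>h' (x(k := y))\<bar> \<le> ?C * exp (K * \<bar>y\<bar>)" using b' eb by metis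
    qed
    then show "(\<integral>y. (x(k:=y)) k * h (x(k:=y)) \<partial>SN) = (\<integral>y. h' (x(k:=y)) \<partial>SN)" by simp
  qed
  also have "\<dots> = (\<integral>w. h' w \<partial>gauss I)"
    using int2 unfolding gauss_def II(1) by (intro product_integral_insert[symmetric] II)
  finally show ?thesis .
qed




definition Om :: "'i set \<Rightarrow> 'j set \<Rightarrow> (('i \<Rightarrow> real) \<times> ('j \<Rightarrow> real)) measure" where
  "Om I J = gauss I \<Otimes>\<^sub>M gauss J"

definition Nrm :: "'i set \<Rightarrow> 'j set \<Rightarrow> ('i \<Rightarrow> real) \<times> ('j \<Rightarrow> real) \<Rightarrow> real" where
  "Nrm I J w = (\<Sum>i\<in>I. \<bar>fst w i\<bar>) + (\<Sum>j\<in>J. \<bar>snd w j\<bar>)"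

definition ugood :: "'i set \<Rightarrow> 'j set \<Rightarrow> (real \<Rightarrow> ('i \<Rightarrow> real) \<times> ('j \<Rightarrow> real) \<Rightarrow> real) \<Rightarrow> bool" where
  "ugood I J f \<longleftrightarrow> (\<exists>C K. 0 \<le> C \<and> 0 \<le> K \<and> (\<forall>x w. \<bar>f x w\<bar> \<le> C * exp (K * Nrm I J w)))"

lemma Nrm_nonneg: "0 \<le> Nrm I J w"
  unfolding Nrm_def by (intro add_nonneg_nonneg sum_nonneg) auto

lemma ugoodI: "0 \<le> C \<Longrightarrow> 0 \<le> K \<Longrightarrow> (\<And>x w. \<bar>f x w\<bar> \<le> C * exp (K * Nrm I J w)) \<Longrightarrow> ugood I J f"
  unfolding ugood_def by blast

lemma exp_mono_K: "0 \<le> K \<Longrightarrow> K \<le> K' \<Longrightarrow> exp (K * Nrm I J w) \<le> exp (K' * Nrm I J w)"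
  using Nrm_nonneg[of I J w] by (simp add: mult_right_mono)

lemma ugood_const: "ugood I J (\<lambda>x w. c)"
  by (rule ugoodI[of "\<bar>c\<bar>" 0]) auto

lemma ugood_add:
  assumes "ugood I J f" "ugood I J g" shows "ugood I J (\<lambda>x w. f x w + g x w)"
proof -
  obtain C1 K1 where 1: "0 \<le> C1" "0 \<le> K1" "\<And>x w. \<bar>f x w\<bar> \<le> C1 * exp (K1 * Nrm I J w)"
    using assms(1) unfolding ugood_def by blast
  obtain C2 K2 where 2: "0 \<le> C2" "0 \<le> K2" "\<And>x w. \<bar>g x w\<bar> \<le> C2 * exp (K2 * Nrm I J w)"
    using assms(2) unfolding ugood_def by blast
  show ?thesis
  proof (rule ugoodI[of "C1 + C2" "max K1 K2"])
    fix x w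
    have "\<bar>f x w + g x w\<bar> \<le> C1 * exp (K1 * Nrm I J w) + C2 * exp (K2 * Nrm I J w)"
      using 1(3)[of x w] 2(3)[of x w] by linarith
    also have "\<dots> \<le> C1 * exp (max K1 K2 * Nrm I J w) + C2 * exp (max K1 K2 * Nrm I J w)"
      using 1 2 by (intro add_mono mult_left_mono exp_mono_K) auto
    finally show "\<bar>f x w + g x w\<bar> \<le> (C1 + C2) * exp (max K1 K2 * Nrm I J w)"
      by (simp add: algebra_simps)
  qed (use 1 2 in auto)
qed

lemma ugood_mult:
  assumes "ugood I J f" "ugood I J g" shows "ugood I J (\<lambda>x w. f x w * g x w)"
proof -
  obtain C1 K1 where 1: "0 \<le> C1" "0 \<le> K1" "\<And>x w. \<bar>f x w\<bar> \<le> C1 * exp (K1 * Nrm I J w)"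
    using assms(1) unfolding ugood_def by blast
  obtain C2 K2 where 2: "0 \<le> C2" "0 \<le> K2" "\<And>x w. \<bar>g x w\<bar> \<le> C2 * exp (K2 * Nrm I J w)"
    using assms(2) unfolding ugood_def by blast
  show ?thesis
  proof (rule ugoodI[of "C1 * C2" "K1 + K2"])
    fix x w
    have "\<bar>f x w * g x w\<bar> = \<bar>f x w\<bar> * \<bar>g x w\<bar>" by (simp add: abs_mult)
    also have "\<dots> \<le> (C1 * exp (K1 * Nrm I J w)) * (C2 * exp (K2 * Nrm I J w))"
      using 1 2 by (intro mult_mono) auto
    finally show "\<bar>f x w * g x w\<bar> \<le> (C1 * C2) * exp ((K1 + K2) * Nrm I J w)"
      by (simp add: algebra_simps exp_add)
  qed (use 1 2 in auto)
qed

lemma ugood_minus: "ugood I J f \<Longrightarrow> ugood I J (\<lambda>x w. - f x w)"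
  unfolding ugood_def by auto

lemma ugood_diff: "ugood I J f \<Longrightarrow> ugood I J g \<Longrightarrow> ugood I J (\<lambda>x w. f x w - g x w)"
  using ugood_add[of I J f "\<lambda>x w. - g x w"] ugood_minus[of I J g] by simp

lemma ugood_sum:
  assumes "\<And>t. t \<in> T \<Longrightarrow> ugood I J (f t)" shows "ugood I J (\<lambda>x w. \<Sum>t\<in>T. f t x w)"
  using assms
proof (induction T rule: infinite_finite_induct)
  case (infinite A) then show ?case by (simp add: ugood_const)
next
  case empty then show ?case by (simp add: ugood_const)
next
  case (insert t F)
  then show ?case by (simp add: ugood_add)
qed

lemma ugood_bounded: "(\<And>x w. \<bar>f x w\<bar> \<le> c) \<Longrightarrow> ugood I J f"
  by (rule ugoodI[of "\<bar>c\<bar>" 0]) (auto intro: order_trans[OF _ abs_ge_self])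

lemma ugood_Nrm: "ugood I J (\<lambda>x w. Nrm I J w)"
proof (rule ugoodI[of 1 1])
  fix x w
  have "Nrm I J w \<le> exp (Nrm I J w)" using exp_ge_add_one_self[of "Nrm I J w"] by linarith
  then show "\<bar>Nrm I J w\<bar> \<le> 1 * exp (1 * Nrm I J w)" using Nrm_nonneg[of I J w] by simp
qed auto

lemma ugood_le: "ugood I J g \<Longrightarrow> (\<And>x w. \<bar>f x w\<bar> \<le> \<bar>g x w\<bar>) \<Longrightarrow> ugood I J f"
  unfolding ugood_def by (meson order_trans)

lemma Nrm_fst: "finite I \<Longrightarrow> finite J \<Longrightarrow> i \<in> I \<Longrightarrow> \<bar>fst w i\<bar> \<le> Nrm I J w"
proof -
  assume "finite I" "finite J" "i \<in> I"
  then have "\<bar>fst w i\<bar> \<le> (\<Sum>i\<in>I. \<bar>fst w i\<bar>)" by (intro member_le_sum) auto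
  moreover have "0 \<le> (\<Sum>j\<in>J. \<bar>snd w j\<bar>)" by (intro sum_nonneg) auto
  ultimately show ?thesis unfolding Nrm_def by linarith
qed

lemma Nrm_snd: "finite I \<Longrightarrow> finite J \<Longrightarrow> j \<in> J \<Longrightarrow> \<bar>snd w j\<bar> \<le> Nrm I J w"
proof -
  assume "finite I" "finite J" "j \<in> J"
  then have "\<bar>snd w j\<bar> \<le> (\<Sum>j\<in>J. \<bar>snd w j\<bar>)" by (intro member_le_sum) auto
  moreover have "0 \<le> (\<Sum>i\<in>I. \<bar>fst w i\<bar>)" by (intro sum_nonneg) auto
  ultimately show ?thesis unfolding Nrm_def by linarith
qed

lemma ugood_fst: "finite I \<Longrightarrow> finite J \<Longrightarrow> i \<in> I \<Longrightarrow> ugood I J (\<lambda>x w. fst w i)"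
  by (rule ugood_le[OF ugood_Nrm]) (metis Nrm_fst Nrm_nonneg abs_of_nonneg)

lemma ugood_snd: "finite I \<Longrightarrow> finite J \<Longrightarrow> j \<in> J \<Longrightarrow> ugood I J (\<lambda>x w. snd w j)"
  by (rule ugood_le[OF ugood_Nrm]) (metis Nrm_snd Nrm_nonneg abs_of_nonneg)

lemma ugood_exp: "0 \<le> L \<Longrightarrow> (\<And>x w. g x w \<le> L * Nrm I J w) \<Longrightarrow> ugood I J (\<lambda>x w. exp (g x w))"
  by (rule ugoodI[of 1 L]) auto

lemma ugood_powr:
  assumes T: "finite T" "T \<noteq> {}" and L: "0 \<le> L" and g: "\<And>t x w. t \<in> T \<Longrightarrow> \<bar>g t x w\<bar> \<le> L * Nrm I J w"
  shows "ugood I J (\<lambda>x w. (\<Sum>t\<in>T. exp (g t x w)) powr r)"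
proof -
  obtain t0 where t0: "t0 \<in> T" using T by auto
  show ?thesis
  proof (cases "0 \<le> r")
    case True
    show ?thesis
    proof (rule ugoodI[of "real (card T) powr r" "r * L"])
      fix x w
      let ?S = "\<Sum>t\<in>T. exp (g t x w)"
      have Spos: "0 < ?S" using T by (intro sum_pos) auto
      have "?S \<le> (\<Sum>t\<in>T. exp (L * Nrm I J w))"
      proof (intro sum_mono)
      fix t assume "t \<in> T"
      then have "\<bar>g t x w\<bar> \<le> L * Nrm I J w" by (rule g)
      then show "exp (g t x w) \<le> exp (L * Nrm I J w)" by simp
    qed
      also have "\<dots> = real (card T) * exp (L * Nrm I J w)" by simp
      finally have "?S powr r \<le> (real (card T) * exp (L * Nrm I J w)) powr r"
        using Spos True by (intro powr_mono2) auto
      also have "\<dots> = real (card T) powr r * exp (r * L * Nrm I J w)"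
      proof -
        have "card T > 0" using T by (simp add: card_gt_0_iff)
        then show ?thesis by (simp add: powr_def ln_mult exp_add[symmetric] algebra_simps)
      qed
      finally show "\<bar>?S powr r\<bar> \<le> real (card T) powr r * exp (r * L * Nrm I J w)" by simp
    qed (use True L in auto)
  next
    case False
    show ?thesis
    proof (rule ugoodI[of 1 "- r * L"])
      fix x w
      let ?S = "\<Sum>t\<in>T. exp (g t x w)"
      have "exp (- L * Nrm I J w) \<le> exp (g t0 x w)"
        using g[OF t0, of x w] by simp
      also have "\<dots> \<le> ?S" using T t0 by (intro member_le_sum) auto
      finally have "?S powr r \<le> exp (- L * Nrm I J w) powr r"
        using False by (intro powr_mono2') auto
      also have "\<dots> = exp (- r * L * Nrm I J w)" by (simp add: powr_def mult_ac)
      finally show "\<bar>?S powr r\<bar> \<le> 1 * exp (- r * L * Nrm I J w)" by simp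
    qed (use False L in \<open>auto simp: mult_nonpos_nonneg\<close>)
  qed
qed




lemma pair_prob_gauss: "pair_prob_space (gauss I) (gauss J)"
  by (simp add: pair_prob_space_def pair_sigma_finite_def prob_gauss prob_space_imp_sigma_finite)

lemma prob_Om: "prob_space (Om I J)"
proof -
  interpret pair_prob_space "gauss I" "gauss J" by (rule pair_prob_gauss)
  show ?thesis unfolding Om_def by unfold_locales
qed

lemma integral_Om_fst:
  fixes f :: "('i \<Rightarrow> real) \<Rightarrow> real"
  assumes [measurable]: "f \<in> borel_measurable (gauss I)"
  shows "(\<integral>w. f (fst w) \<partial>Om I (J::'j set)) = (\<integral>x. f x \<partial>gauss I)"
proof -
  interpret prob_space "gauss J" by (rule prob_gauss)
  have "(\<integral>x. f x \<partial>gauss I) = (\<integral>x. f x \<partial>distr (gauss I \<Otimes>\<^sub>M gauss J) (gauss I) fst)"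
    by (simp add: distr_pair_fst)
  also have "\<dots> = (\<integral>w. f (fst w) \<partial>Om I J)"
    unfolding Om_def by (rule Bochner_Integration.integral_distr[of fst "gauss I \<Otimes>\<^sub>M gauss J" "gauss I" f]) auto
  finally show ?thesis by simp
qed

lemma distr_Om_snd: "distr (gauss I \<Otimes>\<^sub>M gauss J) (gauss J) snd = gauss J"
proof -
  interpret pair_prob_space "gauss I" "gauss J" by (rule pair_prob_gauss)
  show ?thesis
  proof (intro measure_eqI)
    fix A assume A: "A \<in> sets (distr (gauss I \<Otimes>\<^sub>M gauss J) (gauss J) snd)"
    from A have "emeasure (distr (gauss I \<Otimes>\<^sub>M gauss J) (gauss J) snd) A = emeasure (gauss I \<Otimes>\<^sub>M gauss J) (space (gauss I) \<times> A)"
      by (auto simp add: emeasure_distr space_pair_measure dest: sets.sets_into_space intro!: arg_cong2[where f=emeasure])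
    with A show "emeasure (distr (gauss I \<Otimes>\<^sub>M gauss J) (gauss J) snd) A = emeasure (gauss J) A"
      using A by (simp add: M2.emeasure_pair_measure_Times[where N="gauss I"] M1.emeasure_space_1)
  qed simp
qed

lemma integral_Om_snd:
  fixes f :: "('j \<Rightarrow> real) \<Rightarrow> real"
  assumes [measurable]: "f \<in> borel_measurable (gauss J)"
  shows "(\<integral>w. f (snd w) \<partial>Om (I::'i set) J) = (\<integral>x. f x \<partial>gauss J)"
proof -
  have "(\<integral>x. f x \<partial>gauss J) = (\<integral>x. f x \<partial>distr (gauss I \<Otimes>\<^sub>M gauss J) (gauss J) snd)"
    by (simp add: distr_Om_snd)
  also have "\<dots> = (\<integral>w. f (snd w) \<partial>Om I J)"
    unfolding Om_def by (rule Bochner_Integration.integral_distr[of snd "gauss I \<Otimes>\<^sub>M gauss J" "gauss J" f]) auto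
  finally show ?thesis by simp
qed

lemma integrable_pair_product:
  fixes f :: "'a \<Rightarrow> real" and g :: "'b \<Rightarrow> real"
  assumes "pair_sigma_finite M N" "integrable M f" "integrable N g"
  shows "integrable (M \<Otimes>\<^sub>M N) (\<lambda>w. f (fst w) * g (snd w))"
proof -
  interpret pair_sigma_finite M N by fact
  have [measurable]: "f \<in> borel_measurable M" "g \<in> borel_measurable N" using assms by auto
  show ?thesis
  proof (rule Fubini_integrable)
    show "integrable M (\<lambda>x. \<integral>y. norm (f (fst (x, y)) * g (snd (x, y))) \<partial>N)"
      using assms by (simp add: abs_mult)
    show "AE x in M. integrable N (\<lambda>y. f (fst (x, y)) * g (snd (x, y)))"
      using assms by simp
  qed measurable
qed

lemma Nrm_exp_split: "exp (K * Nrm I J w) = exp (K * (\<Sum>i\<in>I. \<bar>fst w i\<bar>)) * exp (K * (\<Sum>j\<in>J. \<bar>snd w j\<bar>))"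
  unfolding Nrm_def by (simp add: distrib_left exp_add)

lemma integrable_Om_exp:
  assumes "finite I" "finite J"
  shows "integrable (Om I J) (\<lambda>w. exp (K * Nrm I J w))"
  unfolding Nrm_exp_split Om_def
  by (rule integrable_pair_product[where f="\<lambda>x. exp (K * (\<Sum>i\<in>I. \<bar>x i\<bar>))" and g="\<lambda>y. exp (K * (\<Sum>j\<in>J. \<bar>y j\<bar>))"])
     (use pair_prob_gauss gauss_exp_integrable assms in \<open>auto simp: pair_prob_space_def\<close>)

lemma integrable_Om_bound:
  assumes "finite I" "finite J" and [measurable]: "f \<in> borel_measurable (Om I J)"
    and b: "\<And>w. \<bar>f w\<bar> \<le> C * exp (K * Nrm I J w)"
  shows "integrable (Om I J) f"
proof (rule Bochner_Integration.integrable_bound)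
  show "integrable (Om I J) (\<lambda>w. C * exp (K * Nrm I J w))"
    using integrable_Om_exp[OF assms(1,2)] by simp
  show "AE w in Om I J. norm (f w) \<le> norm (C * exp (K * Nrm I J w))"
    using b by (intro AE_I2) (metis abs_ge_self order_trans real_norm_def)
qed simp

lemma integrable_Om_ugood:
  assumes "finite I" "finite J" "ugood I J f" "f x \<in> borel_measurable (Om I J)"
  shows "integrable (Om I J) (f x)"
proof -
  obtain C K where "\<And>x w. \<bar>f x w\<bar> \<le> C * exp (K * Nrm I J w)"
    using assms(3) unfolding ugood_def by blast
  then show ?thesis by (intro integrable_Om_bound[OF assms(1,2,4)]) auto
qed

lemma om_ibp1:
  fixes H H' :: "('i \<Rightarrow> real) \<times> ('j \<Rightarrow> real) \<Rightarrow> real"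
  assumes I: "finite I" "finite J" "k \<in> I"
    and mH[measurable]: "H \<in> borel_measurable (Om I J)"
    and mH'[measurable]: "H' \<in> borel_measurable (Om I J)"
    and d: "\<And>x y r. ((\<lambda>r. H (x(k:=r), y)) has_real_derivative H' (x(k:=r), y)) (at r)"
    and c: "\<And>x y r. isCont (\<lambda>r. H' (x(k:=r), y)) r"
    and b: "\<And>w. \<bar>H w\<bar> \<le> C * exp (K * Nrm I J w)"
    and b': "\<And>w. \<bar>H' w\<bar> \<le> C * exp (K * Nrm I J w)"
  shows "(\<integral>w. fst w k * H w \<partial>Om I J) = (\<integral>w. H' w \<partial>Om I J)"
proof -
  interpret pair_prob_space "gauss I" "gauss J" by (rule pair_prob_gauss)
  have mk: "(\<lambda>w. fst w k) \<in> borel_measurable (Om I J)"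
    unfolding Om_def gauss_def using I by measurable
  have "0 \<le> C * exp (K * Nrm I J undefined)"
    using b[of undefined] abs_ge_zero order_trans by blast
  then have C0: "0 \<le> C" by (simp add: zero_le_mult_iff)
  have int1: "integrable (Om I J) (\<lambda>w. fst w k * H w)"
  proof (rule integrable_Om_bound[OF I(1,2)])
    show "(\<lambda>w. fst w k * H w) \<in> borel_measurable (Om I J)" using mk by measurable
    fix w
    have "\<bar>fst w k\<bar> \<le> Nrm I J w" by (rule Nrm_fst[OF I])
    also have "\<dots> \<le> exp (Nrm I J w)" using exp_ge_add_one_self[of "Nrm I J w"] by linarith
    finally have e: "\<bar>fst w k\<bar> \<le> exp (Nrm I J w)" .
    have "\<bar>fst w k * H w\<bar> = \<bar>fst w k\<bar> * \<bar>H w\<bar>" by (simp add: abs_mult)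
    also have "\<dots> \<le> exp (Nrm I J w) * (C * exp (K * Nrm I J w))"
      by (intro mult_mono e b) auto
    also have "\<dots> = C * exp ((K + 1) * Nrm I J w)" by (simp add: algebra_simps exp_add)
    finally show "\<bar>fst w k * H w\<bar> \<le> C * exp ((K + 1) * Nrm I J w)" .
  qed
  have int2: "integrable (Om I J) H'"
    by (rule integrable_Om_bound[OF I(1,2) mH' b'])
  have cp: "(\<lambda>(x,y). x k * H (x,y)) = (\<lambda>w. fst w k * H w)" by auto
  have "(\<integral>w. fst w k * H w \<partial>Om I J) = (\<integral>y. (\<integral>x. x k * H (x, y) \<partial>gauss I) \<partial>gauss J)"
    using integral_snd[of "\<lambda>x y. x k * H (x,y)"] int1 unfolding Om_def cp by simp
  also have "\<dots> = (\<integral>y. (\<integral>x. H' (x, y) \<partial>gauss I) \<partial>gauss J)"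
  proof (rule Bochner_Integration.integral_cong[OF refl])
    fix y assume y: "y \<in> space (gauss J)"
    let ?C = "C * exp (K * (\<Sum>j\<in>J. \<bar>y j\<bar>))"
    have eb: "C * exp (K * Nrm I J (x, y)) = ?C * exp (K * (\<Sum>i\<in>I. \<bar>x i\<bar>))" for x
      unfolding Nrm_exp_split by simp
    show "(\<integral>x. x k * H (x, y) \<partial>gauss I) = (\<integral>x. H' (x, y) \<partial>gauss I)"
    proof (rule gauss_ibp[where C="?C" and K=K])
      show "(\<lambda>x. H (x, y)) \<in> borel_measurable (gauss I)"
        using mH y unfolding Om_def by (rule measurable_Pair1)
      show "(\<lambda>x. H' (x, y)) \<in> borel_measurable (gauss I)"
        using mH' y unfolding Om_def by (rule measurable_Pair1)
      show "\<bar>H (w, y)\<bar> \<le> ?C * exp (K * (\<Sum>i\<in>I. \<bar>w i\<bar>))" for w using b eb by metis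
      show "\<bar>H' (w, y)\<bar> \<le> ?C * exp (K * (\<Sum>i\<in>I. \<bar>w i\<bar>))" for w using b' eb by metis
    qed (use I d c in auto)
  qed
  also have "\<dots> = (\<integral>w. H' w \<partial>Om I J)"
  proof -
    have cp2: "(\<lambda>(x,y). H' (x,y)) = H'" by auto
    show ?thesis using integral_snd[of "\<lambda>x y. H' (x,y)"] int2 unfolding Om_def cp2 by simp
  qed
  finally show ?thesis .
qed

lemma om_ibp2:
  fixes H H' :: "('i \<Rightarrow> real) \<times> ('j \<Rightarrow> real) \<Rightarrow> real"
  assumes I: "finite I" "finite J" "k \<in> J"
    and mH[measurable]: "H \<in> borel_measurable (Om I J)"
    and mH'[measurable]: "H' \<in> borel_measurable (Om I J)"
    and d: "\<And>x y r. ((\<lambda>r. H (x, y(k:=r))) has_real_derivative H' (x, y(k:=r))) (at r)"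
    and c: "\<And>x y r. isCont (\<lambda>r. H' (x, y(k:=r))) r"
    and b: "\<And>w. \<bar>H w\<bar> \<le> C * exp (K * Nrm I J w)"
    and b': "\<And>w. \<bar>H' w\<bar> \<le> C * exp (K * Nrm I J w)"
  shows "(\<integral>w. snd w k * H w \<partial>Om I J) = (\<integral>w. H' w \<partial>Om I J)"
proof -
  interpret pair_prob_space "gauss I" "gauss J" by (rule pair_prob_gauss)
  have mk: "(\<lambda>w. snd w k) \<in> borel_measurable (Om I J)"
    unfolding Om_def gauss_def using I by measurable
  have "0 \<le> C * exp (K * Nrm I J undefined)"
    using b[of undefined] abs_ge_zero order_trans by blast
  then have C0: "0 \<le> C" by (simp add: zero_le_mult_iff)
  have int1: "integrable (Om I J) (\<lambda>w. snd w k * H w)"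
  proof (rule integrable_Om_bound[OF I(1,2)])
    show "(\<lambda>w. snd w k * H w) \<in> borel_measurable (Om I J)" using mk by measurable
    fix w
    have "\<bar>snd w k\<bar> \<le> Nrm I J w" by (rule Nrm_snd[OF I])
    also have "\<dots> \<le> exp (Nrm I J w)" using exp_ge_add_one_self[of "Nrm I J w"] by linarith
    finally have e: "\<bar>snd w k\<bar> \<le> exp (Nrm I J w)" .
    have "\<bar>snd w k * H w\<bar> = \<bar>snd w k\<bar> * \<bar>H w\<bar>" by (simp add: abs_mult)
    also have "\<dots> \<le> exp (Nrm I J w) * (C * exp (K * Nrm I J w))"
      by (intro mult_mono e b) auto
    also have "\<dots> = C * exp ((K + 1) * Nrm I J w)" by (simp add: algebra_simps exp_add)
    finally show "\<bar>snd w k * H w\<bar> \<le> C * exp ((K + 1) * Nrm I J w)" .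
  qed
  have int2: "integrable (Om I J) H'"
    by (rule integrable_Om_bound[OF I(1,2) mH' b'])
  have "(\<integral>w. snd w k * H w \<partial>Om I J) = (\<integral>x. (\<integral>y. y k * H (x, y) \<partial>gauss J) \<partial>gauss I)"
    using integral_fst'[of "\<lambda>w. snd w k * H w"] int1 unfolding Om_def by simp
  also have "\<dots> = (\<integral>x. (\<integral>y. H' (x, y) \<partial>gauss J) \<partial>gauss I)"
  proof (rule Bochner_Integration.integral_cong[OF refl])
    fix x assume x: "x \<in> space (gauss I)"
    let ?C = "C * exp (K * (\<Sum>i\<in>I. \<bar>x i\<bar>))"
    have eb: "C * exp (K * Nrm I J (x, y)) = ?C * exp (K * (\<Sum>j\<in>J. \<bar>y j\<bar>))" for y
      unfolding Nrm_exp_split by simp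
    show "(\<integral>y. y k * H (x, y) \<partial>gauss J) = (\<integral>y. H' (x, y) \<partial>gauss J)"
    proof (rule gauss_ibp[where C="?C" and K=K])
      show "(\<lambda>y. H (x, y)) \<in> borel_measurable (gauss J)"
        using mH x unfolding Om_def by (rule measurable_Pair2)
      show "(\<lambda>y. H' (x, y)) \<in> borel_measurable (gauss J)"
        using mH' x unfolding Om_def by (rule measurable_Pair2)
      show "\<bar>H (x, w)\<bar> \<le> ?C * exp (K * (\<Sum>j\<in>J. \<bar>w j\<bar>))" for w using b eb by (metis mult.assoc)
      show "\<bar>H' (x, w)\<bar> \<le> ?C * exp (K * (\<Sum>j\<in>J. \<bar>w j\<bar>))" for w using b' eb by (metis mult.assoc)
    qed (use I d c in auto)
  qed
  also have "\<dots> = (\<integral>w. H' w \<partial>Om I J)"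
    using integral_fst'[of H'] int2 unfolding Om_def by simp
  finally show ?thesis .
qed




lemma deriv_S:
  assumes "finite T" "T \<noteq> {}" and d: "\<And>s. s \<in> T \<Longrightarrow> (Zs s has_real_derivative Ds s) (at r)"
  shows "((\<lambda>r. \<Sum>s\<in>T. exp (\<beta> * Zs s r)) has_real_derivative (\<Sum>s\<in>T. \<beta> * Ds s * exp (\<beta> * Zs s r))) (at r)"
proof -
  have "((\<lambda>r. exp (\<beta> * Zs s r)) has_real_derivative (\<beta> * Ds s * exp (\<beta> * Zs s r))) (at r)" if "s \<in> T" for s
    using d[OF that] by (auto intro!: derivative_eq_intros)
  then show ?thesis by (intro DERIV_sum) auto
qed

lemma deriv_Spow:
  assumes T: "finite T" "T \<noteq> {}" and d: "\<And>s. s \<in> T \<Longrightarrow> (Zs s has_real_derivative Ds s) (at r)"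
  shows "((\<lambda>r. (\<Sum>s\<in>T. exp (\<beta> * Zs s r)) powr p) has_real_derivative
     (p * (\<Sum>s\<in>T. exp (\<beta> * Zs s r)) powr (p - 1) * (\<Sum>s\<in>T. \<beta> * Ds s * exp (\<beta> * Zs s r)))) (at r)"
proof -
  have pos: "0 < (\<Sum>s\<in>T. exp (\<beta> * Zs s r))" using T by (intro sum_pos) auto
  show ?thesis
    using DERIV_fun_powr[OF deriv_S[OF T d] pos, of p] by (simp add: mult_ac)
qed

lemma deriv_H:
  assumes T: "finite T" "T \<noteq> {}" "t \<in> T" and d: "\<And>s. s \<in> T \<Longrightarrow> (Zs s has_real_derivative Ds s) (at r)"
  shows "((\<lambda>r. (\<Sum>s\<in>T. exp (\<beta> * Zs s r)) powr p * exp (\<beta> * Zs t r)) has_real_derivative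
     (p * (\<Sum>s\<in>T. exp (\<beta> * Zs s r)) powr (p - 1) * (\<Sum>s\<in>T. \<beta> * Ds s * exp (\<beta> * Zs s r))) * exp (\<beta> * Zs t r)
     + (\<Sum>s\<in>T. exp (\<beta> * Zs s r)) powr p * (\<beta> * Ds t * exp (\<beta> * Zs t r))) (at r)"
proof -
  have "((\<lambda>r. exp (\<beta> * Zs t r)) has_real_derivative (\<beta> * Ds t * exp (\<beta> * Zs t r))) (at r)"
    using d[OF T(3)] by (auto intro!: derivative_eq_intros)
  from DERIV_mult[OF deriv_Spow[OF T(1,2) d] this] show ?thesis by (simp add: mult_ac)
qed

lemma sum_alg:
  fixes u :: "'t \<Rightarrow> 'i \<Rightarrow> real" and E :: "'t \<Rightarrow> real"
  shows "(\<Sum>s\<in>T. \<Sum>i\<in>I. u s i * (c * P * (\<Sum>r\<in>T. \<beta> * (sn * u r i) * E r) * E s + Q * (\<beta> * (sn * u s i) * E s)))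
    = \<beta> * sn * (c * P * (\<Sum>s\<in>T. \<Sum>r\<in>T. (\<Sum>i\<in>I. u s i * u r i) * E r * E s) + Q * (\<Sum>s\<in>T. (\<Sum>i\<in>I. u s i * u s i) * E s))"
proof -
  have "(\<Sum>s\<in>T. \<Sum>i\<in>I. u s i * (c * P * (\<Sum>r\<in>T. \<beta> * (sn * u r i) * E r) * E s + Q * (\<beta> * (sn * u s i) * E s)))
    = (\<Sum>s\<in>T. \<Sum>i\<in>I. (\<Sum>r\<in>T. \<beta> * sn * c * P * (u s i * u r i * E r * E s)) + \<beta> * sn * Q * (u s i * u s i * E s))"
    by (intro sum.cong refl) (simp add: sum_distrib_left sum_distrib_right algebra_simps)
  also have "\<dots> = (\<Sum>s\<in>T. (\<Sum>i\<in>I. \<Sum>r\<in>T. \<beta> * sn * c * P * (u s i * u r i * E r * E s)) + (\<Sum>i\<in>I. \<beta> * sn * Q * (u s i * u s i * E s)))"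
    by (simp add: sum.distrib)
  also have "\<dots> = (\<Sum>s\<in>T. (\<Sum>r\<in>T. \<Sum>i\<in>I. \<beta> * sn * c * P * (u s i * u r i * E r * E s)) + (\<Sum>i\<in>I. \<beta> * sn * Q * (u s i * u s i * E s)))"
    by (subst sum.swap) simp
  also have "\<dots> = \<beta> * sn * (c * P * (\<Sum>s\<in>T. \<Sum>r\<in>T. (\<Sum>i\<in>I. u s i * u r i) * E r * E s) + Q * (\<Sum>s\<in>T. (\<Sum>i\<in>I. u s i * u s i) * E s))"
    by (simp add: sum_distrib_left sum_distrib_right sum.distrib algebra_simps)
  finally show ?thesis .
qed




lemma sum_exp_pos: "finite T \<Longrightarrow> T \<noteq> {} \<Longrightarrow> 0 < (\<Sum>s\<in>T. exp (f s :: real))"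
  by (intro sum_pos) auto

context
  fixes I :: "'i set" and J :: "'j set" and T :: "'t set"
    and u :: "'t \<Rightarrow> 'i \<Rightarrow> real" and v :: "'t \<Rightarrow> 'j \<Rightarrow> real" and \<beta> a :: real
  assumes finI: "finite I" and finJ: "finite J" and finT: "finite T" and Tne: "T \<noteq> {}" and \<beta>1: "1 < \<beta>"
begin

definition "lin_u x t = (\<Sum>i\<in>I. x i * u t i)"
definition "lin_v y t = (\<Sum>j\<in>J. y j * v t j)"
definition "Zc \<theta> w t = sin \<theta> * lin_u (fst w) t + cos \<theta> * lin_v (snd w) t"
definition "Sc \<theta> w = (\<Sum>s\<in>T. exp (\<beta> * Zc \<theta> w s))"
definition "Hf \<theta> t w = Sc \<theta> w powr (1/\<beta> - 1) * exp (\<beta> * Zc \<theta> w t)"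
definition "Hx \<theta> t k w = (1/\<beta> - 1) * Sc \<theta> w powr (1/\<beta> - 1 - 1) * (\<Sum>s\<in>T. \<beta> * (sin \<theta> * u s k) * exp (\<beta> * Zc \<theta> w s)) * exp (\<beta> * Zc \<theta> w t)
    + Sc \<theta> w powr (1/\<beta> - 1) * (\<beta> * (sin \<theta> * u t k) * exp (\<beta> * Zc \<theta> w t))"
definition "Hy \<theta> t k w = (1/\<beta> - 1) * Sc \<theta> w powr (1/\<beta> - 1 - 1) * (\<Sum>s\<in>T. \<beta> * (cos \<theta> * v s k) * exp (\<beta> * Zc \<theta> w s)) * exp (\<beta> * Zc \<theta> w t)
    + Sc \<theta> w powr (1/\<beta> - 1) * (\<beta> * (cos \<theta> * v t k) * exp (\<beta> * Zc \<theta> w t))"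

lemma Sc_pos: "0 < Sc \<theta> w"
  unfolding Sc_def using finT Tne by (rule sum_exp_pos)

lemma meas_lin_u[measurable]: "(\<lambda>x. lin_u x t) \<in> borel_measurable (gauss I)"
  unfolding lin_u_def gauss_def by measurable

lemma meas_lin_v[measurable]: "(\<lambda>y. lin_v y t) \<in> borel_measurable (gauss J)"
  unfolding lin_v_def gauss_def by measurable

lemma meas_Zc[measurable]: "(\<lambda>w. Zc \<theta> w t) \<in> borel_measurable (Om I J)"
  unfolding Zc_def Om_def by measurable

lemma meas_Zc2[measurable]: "(\<lambda>p. Zc (snd p) (fst p) t) \<in> borel_measurable (Om I J \<Otimes>\<^sub>M lborel)"
  unfolding Zc_def Om_def by measurable

lemma meas_lin_u2[measurable]: "(\<lambda>p. lin_u (fst (fst p)) t) \<in> borel_measurable (Om I J \<Otimes>\<^sub>M lborel)"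
  unfolding Om_def by measurable

lemma meas_lin_v2[measurable]: "(\<lambda>p. lin_v (snd (fst p)) t) \<in> borel_measurable (Om I J \<Otimes>\<^sub>M lborel)"
  unfolding Om_def by measurable

lemma meas_lin_u1[measurable]: "(\<lambda>w. lin_u (fst w) t) \<in> borel_measurable (Om I J)"
  unfolding Om_def by measurable

lemma meas_lin_v1[measurable]: "(\<lambda>w. lin_v (snd w) t) \<in> borel_measurable (Om I J)"
  unfolding Om_def by measurable

lemma meas_Sc[measurable]: "(\<lambda>w. Sc \<theta> w) \<in> borel_measurable (Om I J)"
  unfolding Sc_def by measurable

lemma meas_Sc2[measurable]: "(\<lambda>p. Sc (snd p) (fst p)) \<in> borel_measurable (Om I J \<Otimes>\<^sub>M lborel)"
  unfolding Sc_def by measurable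

lemma meas_Hf[measurable]: "Hf \<theta> t \<in> borel_measurable (Om I J)"
  unfolding Hf_def by measurable

lemma meas_Hx[measurable]: "Hx \<theta> t k \<in> borel_measurable (Om I J)"
  unfolding Hx_def by measurable

lemma meas_Hy[measurable]: "Hy \<theta> t k \<in> borel_measurable (Om I J)"
  unfolding Hy_def by measurable

definition "RR = (\<Sum>t\<in>T. \<Sum>i\<in>I. \<bar>u t i\<bar>) + (\<Sum>t\<in>T. \<Sum>j\<in>J. \<bar>v t j\<bar>)"

lemma RR_nonneg: "0 \<le> RR"
  unfolding RR_def by (intro add_nonneg_nonneg sum_nonneg) auto

lemma u_le_RR: "t \<in> T \<Longrightarrow> i \<in> I \<Longrightarrow> \<bar>u t i\<bar> \<le> RR"
proof -
  assume t: "t \<in> T" and i: "i \<in> I"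
  have "\<bar>u t i\<bar> \<le> (\<Sum>i\<in>I. \<bar>u t i\<bar>)" using finI i by (intro member_le_sum) auto
  also have "\<dots> \<le> (\<Sum>t\<in>T. \<Sum>i\<in>I. \<bar>u t i\<bar>)" using finT t by (intro member_le_sum sum_nonneg) auto
  also have "\<dots> \<le> RR" unfolding RR_def by (simp add: sum_nonneg)
  finally show ?thesis .
qed

lemma v_le_RR: "t \<in> T \<Longrightarrow> j \<in> J \<Longrightarrow> \<bar>v t j\<bar> \<le> RR"
proof -
  assume t: "t \<in> T" and j: "j \<in> J"
  have "\<bar>v t j\<bar> \<le> (\<Sum>j\<in>J. \<bar>v t j\<bar>)" using finJ j by (intro member_le_sum) auto
  also have "\<dots> \<le> (\<Sum>t\<in>T. \<Sum>j\<in>J. \<bar>v t j\<bar>)" using finT t by (intro member_le_sum sum_nonneg) auto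
  also have "\<dots> \<le> RR" unfolding RR_def by (simp add: sum_nonneg)
  finally show ?thesis .
qed

lemma lin_u_bound: "t \<in> T \<Longrightarrow> \<bar>lin_u x t\<bar> \<le> RR * (\<Sum>i\<in>I. \<bar>x i\<bar>)"
proof -
  assume t: "t \<in> T"
  have "\<bar>lin_u x t\<bar> \<le> (\<Sum>i\<in>I. \<bar>x i * u t i\<bar>)" unfolding lin_u_def by (rule sum_abs)
  also have "\<dots> \<le> (\<Sum>i\<in>I. \<bar>x i\<bar> * RR)"
    using u_le_RR[OF t] by (intro sum_mono) (simp add: abs_mult mult_left_mono)
  also have "\<dots> = (\<Sum>i\<in>I. \<bar>x i\<bar>) * RR" by (rule sum_distrib_right[symmetric])
  also have "\<dots> = RR * (\<Sum>i\<in>I. \<bar>x i\<bar>)" by (rule mult.commute)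
  finally show ?thesis .
qed

lemma lin_v_bound: "t \<in> T \<Longrightarrow> \<bar>lin_v y t\<bar> \<le> RR * (\<Sum>j\<in>J. \<bar>y j\<bar>)"
proof -
  assume t: "t \<in> T"
  have "\<bar>lin_v y t\<bar> \<le> (\<Sum>j\<in>J. \<bar>y j * v t j\<bar>)" unfolding lin_v_def by (rule sum_abs)
  also have "\<dots> \<le> (\<Sum>j\<in>J. \<bar>y j\<bar> * RR)"
    using v_le_RR[OF t] by (intro sum_mono) (simp add: abs_mult mult_left_mono)
  also have "\<dots> = (\<Sum>j\<in>J. \<bar>y j\<bar>) * RR" by (rule sum_distrib_right[symmetric])
  also have "\<dots> = RR * (\<Sum>j\<in>J. \<bar>y j\<bar>)" by (rule mult.commute)
  finally show ?thesis .
qed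

lemma lin_bound_Nrm: "t \<in> T \<Longrightarrow> \<bar>lin_u (fst w) t\<bar> + \<bar>lin_v (snd w) t\<bar> \<le> RR * Nrm I J w"
  using lin_u_bound[of t "fst w"] lin_v_bound[of t "snd w"] unfolding Nrm_def
  by (simp add: distrib_left)

lemma Zc_bound: "t \<in> T \<Longrightarrow> \<bar>\<beta> * Zc \<theta> w t\<bar> \<le> (\<beta> * RR) * Nrm I J w"
proof -
  assume t: "t \<in> T"
  have "\<bar>Zc \<theta> w t\<bar> \<le> \<bar>sin \<theta>\<bar> * \<bar>lin_u (fst w) t\<bar> + \<bar>cos \<theta>\<bar> * \<bar>lin_v (snd w) t\<bar>"
    unfolding Zc_def by (metis abs_mult abs_triangle_ineq)
  also have "\<dots> \<le> 1 * \<bar>lin_u (fst w) t\<bar> + 1 * \<bar>lin_v (snd w) t\<bar>"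
    by (intro add_mono mult_right_mono) auto
  also have "\<dots> \<le> RR * Nrm I J w" using lin_bound_Nrm[OF t, of w] by simp
  finally show ?thesis using \<beta>1 by (simp add: abs_mult mult_left_mono mult.assoc)
qed

lemma ug_Spow: "ugood I J (\<lambda>\<theta> w. Sc \<theta> w powr p)"
  unfolding Sc_def
  by (rule ugood_powr[OF finT Tne, where L="\<beta> * RR"]) (use \<beta>1 RR_nonneg Zc_bound in auto)

lemma ug_E: "t \<in> T \<Longrightarrow> ugood I J (\<lambda>\<theta> w. exp (\<beta> * Zc \<theta> w t))"
proof (rule ugood_exp[where L="\<beta> * RR"])
  show "0 \<le> \<beta> * RR" using \<beta>1 RR_nonneg by simp
  fix \<theta> w assume t: "t \<in> T"
  show "\<beta> * Zc \<theta> w t \<le> \<beta> * RR * Nrm I J w"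
    by (rule order_trans[OF abs_ge_self Zc_bound[OF t]])
qed

lemma ug_sin: "ugood I J (\<lambda>\<theta> w. sin \<theta>)" by (rule ugood_bounded[of _ 1]) auto
lemma ug_cos: "ugood I J (\<lambda>\<theta> w. cos \<theta>)" by (rule ugood_bounded[of _ 1]) auto

lemma ug_lin_u: "t \<in> T \<Longrightarrow> ugood I J (\<lambda>\<theta> w. lin_u (fst w) t)"
proof (rule ugood_le[OF ugood_mult[OF ugood_const[of I J RR] ugood_Nrm]])
  fix \<theta> w assume "t \<in> T"
  then show "\<bar>lin_u (fst w) t\<bar> \<le> \<bar>RR * Nrm I J w\<bar>"
    using lin_bound_Nrm[of t w] RR_nonneg Nrm_nonneg[of I J w] by (simp add: abs_mult)
qed

lemma ug_lin_v: "t \<in> T \<Longrightarrow> ugood I J (\<lambda>\<theta> w. lin_v (snd w) t)"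
proof (rule ugood_le[OF ugood_mult[OF ugood_const[of I J RR] ugood_Nrm]])
  fix \<theta> w assume "t \<in> T"
  then show "\<bar>lin_v (snd w) t\<bar> \<le> \<bar>RR * Nrm I J w\<bar>"
    using lin_bound_Nrm[of t w] RR_nonneg Nrm_nonneg[of I J w] by (simp add: abs_mult)
qed

lemma ug_Hf: "t \<in> T \<Longrightarrow> ugood I J (\<lambda>\<theta> w. Hf \<theta> t w)"
  unfolding Hf_def by (intro ugood_mult ug_Spow ug_E)

lemma ug_Hx: "t \<in> T \<Longrightarrow> ugood I J (\<lambda>\<theta> w. Hx \<theta> t k w)"
  unfolding Hx_def
  by (intro ugood_add ugood_mult ug_Spow ug_E ugood_const ugood_sum ug_sin) auto

lemma ug_Hy: "t \<in> T \<Longrightarrow> ugood I J (\<lambda>\<theta> w. Hy \<theta> t k w)"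
  unfolding Hy_def
  by (intro ugood_add ugood_mult ug_Spow ug_E ugood_const ugood_sum ug_cos) auto


lemma ugood_two: "ugood I J f \<Longrightarrow> ugood I J g \<Longrightarrow>
  \<exists>C K. \<forall>x w. \<bar>f x w\<bar> \<le> C * exp (K * Nrm I J w) \<and> \<bar>g x w\<bar> \<le> C * exp (K * Nrm I J w)"
proof -
  assume "ugood I J f" "ugood I J g"
  then obtain C1 K1 C2 K2 where 1: "0 \<le> C1" "0 \<le> K1" "\<And>x w. \<bar>f x w\<bar> \<le> C1 * exp (K1 * Nrm I J w)"
    and 2: "0 \<le> C2" "0 \<le> K2" "\<And>x w. \<bar>g x w\<bar> \<le> C2 * exp (K2 * Nrm I J w)"
    unfolding ugood_def by blast
  have "\<bar>f x w\<bar> \<le> (C1 + C2) * exp (max K1 K2 * Nrm I J w) \<and> \<bar>g x w\<bar> \<le> (C1 + C2) * exp (max K1 K2 * Nrm I J w)" for x w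
  proof -
    have a: "exp (K1 * Nrm I J w) \<le> exp (max K1 K2 * Nrm I J w)" "exp (K2 * Nrm I J w) \<le> exp (max K1 K2 * Nrm I J w)"
      using exp_mono_K[of K1 "max K1 K2" I J w] exp_mono_K[of K2 "max K1 K2" I J w] 1 2 by auto
    have "C1 * exp (K1 * Nrm I J w) \<le> (C1 + C2) * exp (max K1 K2 * Nrm I J w)"
      using 1 2 a by (intro mult_mono) auto
    moreover have "C2 * exp (K2 * Nrm I J w) \<le> (C1 + C2) * exp (max K1 K2 * Nrm I J w)"
      using 1 2 a by (intro mult_mono) auto
    ultimately show ?thesis using 1(3)[of x w] 2(3)[of x w] by linarith
  qed
  then show ?thesis by blast
qed

lemma lin_u_line: "k \<in> I \<Longrightarrow> lin_u (x(k:=r)) s = lin_u x s + (r - x k) * u s k"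
proof -
  assume k: "k \<in> I"
  have e: "(\<Sum>i\<in>I-{k}. (x(k:=r)) i * u s i) = (\<Sum>i\<in>I-{k}. x i * u s i)"
    by (intro sum.cong) auto
  show ?thesis unfolding lin_u_def
    using sum.remove[OF finI k, of "\<lambda>i. (x(k:=r)) i * u s i"] sum.remove[OF finI k, of "\<lambda>i. x i * u s i"] e
    by (simp add: algebra_simps)
qed

lemma lin_v_line: "k \<in> J \<Longrightarrow> lin_v (y(k:=r)) s = lin_v y s + (r - y k) * v s k"
proof -
  assume k: "k \<in> J"
  have e: "(\<Sum>i\<in>J-{k}. (y(k:=r)) i * v s i) = (\<Sum>i\<in>J-{k}. y i * v s i)"
    by (intro sum.cong) auto
  show ?thesis unfolding lin_v_def
    using sum.remove[OF finJ k, of "\<lambda>i. (y(k:=r)) i * v s i"] sum.remove[OF finJ k, of "\<lambda>i. y i * v s i"] e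
    by (simp add: algebra_simps)
qed

lemma Zc_line1: "k \<in> I \<Longrightarrow> Zc \<theta> (x(k:=r), y) s = Zc \<theta> (x, y) s + (r - x k) * (sin \<theta> * u s k)"
  unfolding Zc_def by (simp add: lin_u_line algebra_simps)

lemma Zc_line2: "k \<in> J \<Longrightarrow> Zc \<theta> (x, y(k:=r)) s = Zc \<theta> (x, y) s + (r - y k) * (cos \<theta> * v s k)"
  unfolding Zc_def by (simp add: lin_v_line algebra_simps)

lemma ibp_x:
  assumes t: "t \<in> T" and k: "k \<in> I"
  shows "(\<integral>w. fst w k * Hf \<theta> t w \<partial>Om I J) = (\<integral>w. Hx \<theta> t k w \<partial>Om I J)"
proof -
  have "\<exists>C K. \<forall>x w. \<bar>Hf x t w\<bar> \<le> C * exp (K * Nrm I J w) \<and> \<bar>Hx x t k w\<bar> \<le> C * exp (K * Nrm I J w)"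
    by (rule ugood_two[OF ug_Hf[OF t] ug_Hx[OF t, of k]])
  then obtain C K where CK: "\<forall>x w. \<bar>Hf x t w\<bar> \<le> C * exp (K * Nrm I J w) \<and> \<bar>Hx x t k w\<bar> \<le> C * exp (K * Nrm I J w)"
    by blast
  show ?thesis
  proof (rule om_ibp1[OF finI finJ k, where C=C and K=K])
    fix x y r
    let ?A = "\<lambda>s. Zc \<theta> (x, y) s - x k * (sin \<theta> * u s k)" and ?b = "\<lambda>s. sin \<theta> * u s k"
    have e1: "(\<lambda>r. Hf \<theta> t (x(k:=r), y)) = (\<lambda>r. (\<Sum>s\<in>T. exp (\<beta> * (?A s + r * ?b s))) powr (1/\<beta> - 1) * exp (\<beta> * (?A t + r * ?b t)))"
      unfolding Hf_def Sc_def by (simp add: Zc_line1[OF k] algebra_simps)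
    have e2: "Hx \<theta> t k (x(k:=r), y) = ((1/\<beta> - 1) * (\<Sum>s\<in>T. exp (\<beta> * (?A s + r * ?b s))) powr (1/\<beta> - 1 - 1) * (\<Sum>s\<in>T. \<beta> * ?b s * exp (\<beta> * (?A s + r * ?b s)))) * exp (\<beta> * (?A t + r * ?b t))
     + (\<Sum>s\<in>T. exp (\<beta> * (?A s + r * ?b s))) powr (1/\<beta> - 1) * (\<beta> * ?b t * exp (\<beta> * (?A t + r * ?b t)))"
      for r unfolding Hx_def Sc_def by (simp add: Zc_line1[OF k] algebra_simps)
    have d: "((\<lambda>r. ?A s + r * ?b s) has_real_derivative ?b s) (at r)" for s
      by (auto intro!: derivative_eq_intros)
    show "((\<lambda>r. Hf \<theta> t (x(k:=r), y)) has_real_derivative Hx \<theta> t k (x(k:=r), y)) (at r)"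
      unfolding e1 e2 by (rule deriv_H[OF finT Tne t d])
    have pos: "\<And>r. (\<Sum>s\<in>T. exp (\<beta> * (?A s + r * ?b s))) \<noteq> 0" using sum_exp_pos[OF finT Tne] by (metis less_irrefl)
    show "isCont (\<lambda>r. Hx \<theta> t k (x(k:=r), y)) r"
      unfolding e2 by (intro continuous_intros pos)
  qed (use CK in auto)
qed

lemma ibp_y:
  assumes t: "t \<in> T" and k: "k \<in> J"
  shows "(\<integral>w. snd w k * Hf \<theta> t w \<partial>Om I J) = (\<integral>w. Hy \<theta> t k w \<partial>Om I J)"
proof -
  have "\<exists>C K. \<forall>x w. \<bar>Hf x t w\<bar> \<le> C * exp (K * Nrm I J w) \<and> \<bar>Hy x t k w\<bar> \<le> C * exp (K * Nrm I J w)"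
    by (rule ugood_two[OF ug_Hf[OF t] ug_Hy[OF t, of k]])
  then obtain C K where CK: "\<forall>x w. \<bar>Hf x t w\<bar> \<le> C * exp (K * Nrm I J w) \<and> \<bar>Hy x t k w\<bar> \<le> C * exp (K * Nrm I J w)"
    by blast
  show ?thesis
  proof (rule om_ibp2[OF finI finJ k, where C=C and K=K])
    fix x y r
    let ?A = "\<lambda>s. Zc \<theta> (x, y) s - y k * (cos \<theta> * v s k)" and ?b = "\<lambda>s. cos \<theta> * v s k"
    have e1: "(\<lambda>r. Hf \<theta> t (x, y(k:=r))) = (\<lambda>r. (\<Sum>s\<in>T. exp (\<beta> * (?A s + r * ?b s))) powr (1/\<beta> - 1) * exp (\<beta> * (?A t + r * ?b t)))"
      unfolding Hf_def Sc_def by (simp add: Zc_line2[OF k] algebra_simps)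
    have e2: "Hy \<theta> t k (x, y(k:=r)) = ((1/\<beta> - 1) * (\<Sum>s\<in>T. exp (\<beta> * (?A s + r * ?b s))) powr (1/\<beta> - 1 - 1) * (\<Sum>s\<in>T. \<beta> * ?b s * exp (\<beta> * (?A s + r * ?b s)))) * exp (\<beta> * (?A t + r * ?b t))
     + (\<Sum>s\<in>T. exp (\<beta> * (?A s + r * ?b s))) powr (1/\<beta> - 1) * (\<beta> * ?b t * exp (\<beta> * (?A t + r * ?b t)))"
      for r unfolding Hy_def Sc_def by (simp add: Zc_line2[OF k] algebra_simps)
    have d: "((\<lambda>r. ?A s + r * ?b s) has_real_derivative ?b s) (at r)" for s
      by (auto intro!: derivative_eq_intros)
    show "((\<lambda>r. Hf \<theta> t (x, y(k:=r))) has_real_derivative Hy \<theta> t k (x, y(k:=r))) (at r)"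
      unfolding e1 e2 by (rule deriv_H[OF finT Tne t d])
    have pos: "\<And>r. (\<Sum>s\<in>T. exp (\<beta> * (?A s + r * ?b s))) \<noteq> 0" using sum_exp_pos[OF finT Tne] by (metis less_irrefl)
    show "isCont (\<lambda>r. Hy \<theta> t k (x, y(k:=r))) r"
      unfolding e2 by (intro continuous_intros pos)
  qed (use CK in auto)
qed


definition "Gf \<theta> w = exp (a * (sin \<theta>)\<^sup>2 / 2) * Sc \<theta> w powr (1/\<beta>)"
definition "Gd \<theta> w = exp (a * (sin \<theta>)\<^sup>2 / 2) * (a * sin \<theta> * cos \<theta>) * Sc \<theta> w powr (1/\<beta>)
   + exp (a * (sin \<theta>)\<^sup>2 / 2) * ((1/\<beta>) * Sc \<theta> w powr (1/\<beta> - 1) *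
       (\<Sum>s\<in>T. \<beta> * (cos \<theta> * lin_u (fst w) s - sin \<theta> * lin_v (snd w) s) * exp (\<beta> * Zc \<theta> w s)))"

lemma Gd_deriv: "((\<lambda>\<theta>. Gf \<theta> w) has_real_derivative Gd \<theta> w) (at \<theta>)"
proof -
  have d: "((\<lambda>\<theta>. Zc \<theta> w s) has_real_derivative (cos \<theta> * lin_u (fst w) s - sin \<theta> * lin_v (snd w) s)) (at \<theta>)" for s
    unfolding Zc_def by (auto intro!: derivative_eq_intros)
  have d1: "((\<lambda>\<theta>. exp (a * (sin \<theta>)\<^sup>2 / 2)) has_real_derivative exp (a * (sin \<theta>)\<^sup>2 / 2) * (a * sin \<theta> * cos \<theta>)) (at \<theta>)"
    by (auto intro!: derivative_eq_intros simp: power2_eq_square)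
  note d2 = deriv_Spow[OF finT Tne d, where \<beta>=\<beta> and p="1/\<beta>"]
  show ?thesis
    using DERIV_mult[OF d1 d2] unfolding Gf_def Gd_def Sc_def by (simp add: mult_ac)
qed

lemma Gd_cont: "continuous_on A (\<lambda>\<theta>. Gd \<theta> w)"
proof -
  have pos: "\<And>\<theta>. (\<Sum>s\<in>T. exp (\<beta> * Zc \<theta> w s)) \<noteq> 0" using sum_exp_pos[OF finT Tne] by (metis less_irrefl)
  show ?thesis unfolding Gd_def Sc_def Zc_def
    by (intro continuous_intros) (use pos[unfolded Zc_def] in auto)
qed

lemma Gd_rewrite: "Gd \<theta> w = exp (a * (sin \<theta>)\<^sup>2 / 2) * (a * sin \<theta> * cos \<theta> * Sc \<theta> w powr (1/\<beta>)
   + cos \<theta> * (\<Sum>s\<in>T. \<Sum>i\<in>I. u s i * (fst w i * Hf \<theta> s w))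
   - sin \<theta> * (\<Sum>s\<in>T. \<Sum>j\<in>J. v s j * (snd w j * Hf \<theta> s w)))"
proof -
  let ?Q = "Sc \<theta> w powr (1/\<beta> - 1)" and ?E = "\<lambda>s. exp (\<beta> * Zc \<theta> w s)"
  have 1: "(\<Sum>i\<in>I. u s i * (fst w i * Hf \<theta> s w)) = ?Q * ?E s * lin_u (fst w) s" for s
    unfolding Hf_def lin_u_def by (simp add: sum_distrib_right mult_ac)
  have 2: "(\<Sum>j\<in>J. v s j * (snd w j * Hf \<theta> s w)) = ?Q * ?E s * lin_v (snd w) s" for s
    unfolding Hf_def lin_v_def by (simp add: sum_distrib_right mult_ac)
  have 3: "(1/\<beta>) * ?Q * (\<Sum>s\<in>T. \<beta> * (cos \<theta> * lin_u (fst w) s - sin \<theta> * lin_v (snd w) s) * ?E s)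
     = cos \<theta> * (\<Sum>s\<in>T. ?Q * ?E s * lin_u (fst w) s) - sin \<theta> * (\<Sum>s\<in>T. ?Q * ?E s * lin_v (snd w) s)"
    using \<beta>1 by (simp add: sum_distrib_left sum_subtractf[symmetric] algebra_simps)
  show ?thesis unfolding Gd_def 3 1 2 by (simp add: algebra_simps)
qed

lemma lin_comb:
  fixes M :: "'m measure" and hh :: "'m \<Rightarrow> real" and f :: "'t \<Rightarrow> 'i \<Rightarrow> 'm \<Rightarrow> real" and g :: "'t \<Rightarrow> 'j \<Rightarrow> 'm \<Rightarrow> real"
  assumes i0: "integrable M hh" and i1: "\<And>s i. s \<in> T \<Longrightarrow> i \<in> I \<Longrightarrow> integrable M (f s i)"
    and i2: "\<And>s j. s \<in> T \<Longrightarrow> j \<in> J \<Longrightarrow> integrable M (g s j)"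
  shows "(\<integral>w. e * (cc0 * hh w + cc1 * (\<Sum>s\<in>T. \<Sum>i\<in>I. A s i * f s i w) - cc2 * (\<Sum>s\<in>T. \<Sum>j\<in>J. B s j * g s j w)) \<partial>M)
    = e * (cc0 * (\<integral>w. hh w \<partial>M) + cc1 * (\<Sum>s\<in>T. \<Sum>i\<in>I. A s i * (\<integral>w. f s i w \<partial>M)) - cc2 * (\<Sum>s\<in>T. \<Sum>j\<in>J. B s j * (\<integral>w. g s j w \<partial>M)))"
proof -
  have s1: "integrable M (\<lambda>w. \<Sum>s\<in>T. \<Sum>i\<in>I. A s i * f s i w)"
  proof (intro Bochner_Integration.integrable_sum)
    fix s i assume "s \<in> T" "i \<in> I"
    then show "integrable M (\<lambda>x. A s i * f s i x)" by (intro Bochner_Integration.integrable_mult_right i1)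
  qed
  have s2: "integrable M (\<lambda>w. \<Sum>s\<in>T. \<Sum>j\<in>J. B s j * g s j w)"
  proof (intro Bochner_Integration.integrable_sum)
    fix s j assume "s \<in> T" "j \<in> J"
    then show "integrable M (\<lambda>x. B s j * g s j x)" by (intro Bochner_Integration.integrable_mult_right i2)
  qed
  have e1: "(\<integral>w. (\<Sum>s\<in>T. \<Sum>i\<in>I. A s i * f s i w) \<partial>M) = (\<Sum>s\<in>T. \<Sum>i\<in>I. A s i * (\<integral>w. f s i w \<partial>M))"
    using i1 by (simp add: Bochner_Integration.integral_sum Bochner_Integration.integrable_sum)
  have e2: "(\<integral>w. (\<Sum>s\<in>T. \<Sum>j\<in>J. B s j * g s j w) \<partial>M) = (\<Sum>s\<in>T. \<Sum>j\<in>J. B s j * (\<integral>w. g s j w \<partial>M))"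
    using i2 by (simp add: Bochner_Integration.integral_sum Bochner_Integration.integrable_sum)
  have "(\<integral>w. e * (cc0 * hh w + cc1 * (\<Sum>s\<in>T. \<Sum>i\<in>I. A s i * f s i w) - cc2 * (\<Sum>s\<in>T. \<Sum>j\<in>J. B s j * g s j w)) \<partial>M)
    = e * ((\<integral>w. cc0 * hh w \<partial>M) + (\<integral>w. cc1 * (\<Sum>s\<in>T. \<Sum>i\<in>I. A s i * f s i w) \<partial>M) - (\<integral>w. cc2 * (\<Sum>s\<in>T. \<Sum>j\<in>J. B s j * g s j w) \<partial>M))"
    using i0 s1 s2 by (simp add: Bochner_Integration.integral_add Bochner_Integration.integral_diff)
  also have "\<dots> = e * (cc0 * (\<integral>w. hh w \<partial>M) + cc1 * (\<Sum>s\<in>T. \<Sum>i\<in>I. A s i * (\<integral>w. f s i w \<partial>M)) - cc2 * (\<Sum>s\<in>T. \<Sum>j\<in>J. B s j * (\<integral>w. g s j w \<partial>M)))"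
    by (simp add: e1 e2)
  finally show ?thesis .
qed


lemma ug_ea: "ugood I J (\<lambda>\<theta> w. exp (a * (sin \<theta>)\<^sup>2 / 2))"
proof (rule ugood_bounded[where c="exp (\<bar>a\<bar> / 2)"])
  fix \<theta> :: real and w :: "('i \<Rightarrow> real) \<times> ('j \<Rightarrow> real)"
  have "(sin \<theta>)\<^sup>2 \<le> 1" by (simp add: abs_square_le_1)
  then have "a * (sin \<theta>)\<^sup>2 \<le> \<bar>a\<bar>"
    by (metis abs_ge_self abs_mult abs_of_nonneg mult_left_le order_trans zero_le_power2 abs_ge_zero)
  then show "\<bar>exp (a * (sin \<theta>)\<^sup>2 / 2)\<bar> \<le> exp (\<bar>a\<bar> / 2)" by simp
qed

lemma ug_Gd: "ugood I J Gd"
proof -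
  have "ugood I J (\<lambda>\<theta> w. Gd \<theta> w)"
    unfolding Gd_def
    by (intro ugood_add ugood_mult ugood_diff ug_ea ugood_const ug_sin ug_cos ug_Spow ugood_sum ug_E ug_lin_u ug_lin_v) auto
  then show ?thesis by simp
qed

lemma ug_Gf: "ugood I J Gf"
proof -
  have "ugood I J (\<lambda>\<theta> w. Gf \<theta> w)"
    unfolding Gf_def by (intro ugood_mult ug_ea ug_Spow)
  then show ?thesis by simp
qed

lemma pointwise_nonpos:
  assumes cov: "\<And>s r. s \<in> T \<Longrightarrow> r \<in> T \<Longrightarrow> (\<Sum>j\<in>J. v s j * v r j) \<le> (\<Sum>i\<in>I. u s i * u r i) + a"
    and diag: "\<And>s. s \<in> T \<Longrightarrow> (\<Sum>j\<in>J. v s j * v s j) = (\<Sum>i\<in>I. u s i * u s i) + a"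
    and th: "0 \<le> \<theta>" "\<theta> \<le> pi/2"
  shows "exp (a * (sin \<theta>)\<^sup>2 / 2) * (a * sin \<theta> * cos \<theta> * Sc \<theta> w powr (1/\<beta>)
     + cos \<theta> * (\<Sum>s\<in>T. \<Sum>i\<in>I. u s i * Hx \<theta> s i w) - sin \<theta> * (\<Sum>s\<in>T. \<Sum>j\<in>J. v s j * Hy \<theta> s j w)) \<le> 0"
proof -
  define S where "S = Sc \<theta> w"
  define P where "P = S powr (1/\<beta> - 1 - 1)"
  define Q where "Q = S powr (1/\<beta> - 1)"
  define E where "E = (\<lambda>r. exp (\<beta> * Zc \<theta> w r))"
  define c where "c = 1/\<beta> - 1"
  define sn where "sn = sin \<theta>"
  define cs where "cs = cos \<theta>"
  define CU where "CU = (\<lambda>s r. \<Sum>i\<in>I. u s i * u r i)"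
  define CV where "CV = (\<lambda>s r. \<Sum>j\<in>J. v s j * v r j)"
  define A1 where "A1 = (\<Sum>s\<in>T. \<Sum>r\<in>T. CU s r * E r * E s)"
  define A2 where "A2 = (\<Sum>s\<in>T. CU s s * E s)"
  define B1 where "B1 = (\<Sum>s\<in>T. \<Sum>r\<in>T. CV s r * E r * E s)"
  define B2 where "B2 = (\<Sum>s\<in>T. CV s s * E s)"
  have Spos: "0 < S" unfolding S_def by (rule Sc_pos)
  have SE: "S = (\<Sum>s\<in>T. E s)" unfolding S_def Sc_def E_def ..
  have hx: "(\<Sum>s\<in>T. \<Sum>i\<in>I. u s i * Hx \<theta> s i w) = \<beta> * sn * (c * P * A1 + Q * A2)"
    unfolding Hx_def A1_def A2_def CU_def P_def Q_def c_def S_def E_def sn_def by (rule sum_alg)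
  have hy: "(\<Sum>s\<in>T. \<Sum>j\<in>J. v s j * Hy \<theta> s j w) = \<beta> * cs * (c * P * B1 + Q * B2)"
    unfolding Hy_def B1_def B2_def CV_def P_def Q_def c_def S_def E_def cs_def by (rule sum_alg)
  have B2eq: "B2 = A2 + a * S"
    unfolding B2_def A2_def SE CV_def CU_def using diag
    by (simp add: sum.distrib distrib_right sum_distrib_left)
  have QP: "Q = P * S"
  proof -
    have "S powr (1/\<beta> - 1 - 1) * S powr 1 = S powr ((1/\<beta> - 1 - 1) + 1)" by (rule powr_add[symmetric])
    then show ?thesis unfolding Q_def P_def using Spos by simp
  qed
  have SG: "S powr (1/\<beta>) = P * S * S"
  proof -
    have "S powr (1/\<beta> - 1) * S powr 1 = S powr ((1/\<beta> - 1) + 1)" by (rule powr_add[symmetric])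
    then have "S powr (1/\<beta>) = Q * S" unfolding Q_def using Spos by simp
    then show ?thesis using QP by simp
  qed
  have SS: "S * S = (\<Sum>s\<in>T. \<Sum>r\<in>T. E r * E s)" unfolding SE by (simp add: sum_product mult.commute)
  define X where "X = (\<Sum>s\<in>T. \<Sum>r\<in>T. (CU s r - CV s r + a) * E r * E s)"
  have Xeq: "X = A1 - B1 + a * (S * S)"
    unfolding X_def A1_def B1_def SS
    by (simp add: sum_subtractf[symmetric] sum.distrib[symmetric] sum_distrib_left algebra_simps)
  have X0: "0 \<le> X"
    unfolding X_def E_def CU_def CV_def
  proof (intro sum_nonneg mult_nonneg_nonneg)
    fix s r assume "s \<in> T" "r \<in> T"
    from cov[OF this] show "0 \<le> (\<Sum>i\<in>I. u s i * u r i) - (\<Sum>j\<in>J. v s j * v r j) + a" by linarith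
  qed auto
  have cb: "\<beta> * c = 1 - \<beta>" unfolding c_def using \<beta>1 by (simp add: field_simps)
  have key: "a * sn * cs * (P * S * S) + cs * (\<beta> * sn * (c * P * A1 + (P * S) * A2)) - sn * (\<beta> * cs * (c * P * B1 + (P * S) * (A2 + a * S)))
     = sn * cs * \<beta> * c * P * (A1 - B1 + a * (S * S))"
    using cb by algebra
  have tot: "a * sin \<theta> * cos \<theta> * Sc \<theta> w powr (1/\<beta>)
     + cos \<theta> * (\<Sum>s\<in>T. \<Sum>i\<in>I. u s i * Hx \<theta> s i w) - sin \<theta> * (\<Sum>s\<in>T. \<Sum>j\<in>J. v s j * Hy \<theta> s j w)
     = sn * cs * \<beta> * c * P * X"
    unfolding hx hy Xeq key[symmetric] B2eq[symmetric]
    by (simp add: S_def[symmetric] sn_def cs_def SG QP B2eq)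
  have sn0: "0 \<le> sn" unfolding sn_def using th by (intro sin_ge_zero) auto
  have cs0: "0 \<le> cs" unfolding cs_def using th by (intro cos_ge_zero) auto
  have c0: "c < 0" unfolding c_def using \<beta>1 by (simp add: field_simps)
  have P0: "0 < P" unfolding P_def using Spos by simp
  have "0 \<le> sn * cs * \<beta> * P * X" using sn0 cs0 \<beta>1 P0 X0 by simp
  then have "sn * cs * \<beta> * c * P * X \<le> 0"
    using c0 mult_nonneg_nonpos[of "sn * cs * \<beta> * P * X" c] by (simp add: mult_ac)
  then show ?thesis unfolding tot by (simp add: mult_nonneg_nonpos)
qed


lemma meas_fst_Om[measurable]: "i \<in> I \<Longrightarrow> (\<lambda>w. fst w i) \<in> borel_measurable (Om I J)"
  unfolding Om_def gauss_def by measurable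

lemma meas_snd_Om[measurable]: "j \<in> J \<Longrightarrow> (\<lambda>w. snd w j) \<in> borel_measurable (Om I J)"
  unfolding Om_def gauss_def by measurable

lemma Gd_int_nonpos:
  assumes cov: "\<And>s r. s \<in> T \<Longrightarrow> r \<in> T \<Longrightarrow> (\<Sum>j\<in>J. v s j * v r j) \<le> (\<Sum>i\<in>I. u s i * u r i) + a"
    and diag: "\<And>s. s \<in> T \<Longrightarrow> (\<Sum>j\<in>J. v s j * v s j) = (\<Sum>i\<in>I. u s i * u s i) + a"
    and th: "0 \<le> \<theta>" "\<theta> \<le> pi/2"
  shows "(\<integral>w. Gd \<theta> w \<partial>Om I J) \<le> 0"
proof -
  let ?ea = "exp (a * (sin \<theta>)\<^sup>2 / 2)"
  have iS: "integrable (Om I J) (\<lambda>w. Sc \<theta> w powr (1/\<beta>))"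
    using integrable_Om_ugood[OF finI finJ ug_Spow[of "1/\<beta>"], of \<theta>] by simp
  have if1: "integrable (Om I J) (\<lambda>w. fst w i * Hf \<theta> s w)" if "s \<in> T" "i \<in> I" for s i
    using integrable_Om_ugood[OF finI finJ ugood_mult[OF ugood_fst[OF finI finJ that(2)] ug_Hf[OF that(1)]], of \<theta>]
      that by simp
  have ig1: "integrable (Om I J) (\<lambda>w. snd w j * Hf \<theta> s w)" if "s \<in> T" "j \<in> J" for s j
    using integrable_Om_ugood[OF finI finJ ugood_mult[OF ugood_snd[OF finI finJ that(2)] ug_Hf[OF that(1)]], of \<theta>]
      that by simp
  have ihx: "integrable (Om I J) (Hx \<theta> s i)" if "s \<in> T" "i \<in> I" for s i
    using integrable_Om_ugood[OF finI finJ ug_Hx[OF that(1)], of \<theta>] by simp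
  have ihy: "integrable (Om I J) (Hy \<theta> s j)" if "s \<in> T" "j \<in> J" for s j
    using integrable_Om_ugood[OF finI finJ ug_Hy[OF that(1)], of \<theta>] by simp
  have "(\<integral>w. Gd \<theta> w \<partial>Om I J) = (\<integral>w. ?ea * (a * sin \<theta> * cos \<theta> * Sc \<theta> w powr (1/\<beta>)
      + cos \<theta> * (\<Sum>s\<in>T. \<Sum>i\<in>I. u s i * (fst w i * Hf \<theta> s w))
      - sin \<theta> * (\<Sum>s\<in>T. \<Sum>j\<in>J. v s j * (snd w j * Hf \<theta> s w))) \<partial>Om I J)"
    by (simp add: Gd_rewrite)
  also have "\<dots> = ?ea * (a * sin \<theta> * cos \<theta> * (\<integral>w. Sc \<theta> w powr (1/\<beta>) \<partial>Om I J)
      + cos \<theta> * (\<Sum>s\<in>T. \<Sum>i\<in>I. u s i * (\<integral>w. fst w i * Hf \<theta> s w \<partial>Om I J))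
      - sin \<theta> * (\<Sum>s\<in>T. \<Sum>j\<in>J. v s j * (\<integral>w. snd w j * Hf \<theta> s w \<partial>Om I J)))"
    by (rule lin_comb[where hh="\<lambda>w. Sc \<theta> w powr (1/\<beta>)" and f="\<lambda>s i w. fst w i * Hf \<theta> s w"
          and g="\<lambda>s j w. snd w j * Hf \<theta> s w", OF iS if1 ig1])
  also have "\<dots> = ?ea * (a * sin \<theta> * cos \<theta> * (\<integral>w. Sc \<theta> w powr (1/\<beta>) \<partial>Om I J)
      + cos \<theta> * (\<Sum>s\<in>T. \<Sum>i\<in>I. u s i * (\<integral>w. Hx \<theta> s i w \<partial>Om I J))
      - sin \<theta> * (\<Sum>s\<in>T. \<Sum>j\<in>J. v s j * (\<integral>w. Hy \<theta> s j w \<partial>Om I J)))"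
    using ibp_x ibp_y by (simp cong: sum.cong)
  also have "\<dots> = (\<integral>w. ?ea * (a * sin \<theta> * cos \<theta> * Sc \<theta> w powr (1/\<beta>)
      + cos \<theta> * (\<Sum>s\<in>T. \<Sum>i\<in>I. u s i * Hx \<theta> s i w)
      - sin \<theta> * (\<Sum>s\<in>T. \<Sum>j\<in>J. v s j * Hy \<theta> s j w)) \<partial>Om I J)"
    by (rule lin_comb[where hh="\<lambda>w. Sc \<theta> w powr (1/\<beta>)" and f="\<lambda>s i w. Hx \<theta> s i w"
          and g="\<lambda>s j w. Hy \<theta> s j w", OF iS ihx ihy, symmetric])
  also have "\<dots> \<le> 0"
  proof -
    let ?F = "\<lambda>w. ?ea * (a * sin \<theta> * cos \<theta> * Sc \<theta> w powr (1/\<beta>)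
      + cos \<theta> * (\<Sum>s\<in>T. \<Sum>i\<in>I. u s i * Hx \<theta> s i w)
      - sin \<theta> * (\<Sum>s\<in>T. \<Sum>j\<in>J. v s j * Hy \<theta> s j w))"
    have "0 \<le> (\<integral>w. - ?F w \<partial>Om I J)"
      by (intro integral_nonneg_AE AE_I2) (use pointwise_nonpos[OF cov diag th] in auto)
    then show ?thesis by simp
  qed
  finally show ?thesis .
qed

lemma ftc: "Gf (pi/2) w - Gf 0 w = (\<integral>\<theta>. indicator {0..pi/2} \<theta> * Gd \<theta> w \<partial>lborel)"
proof -
  have "(\<integral>\<theta>. indicator {0..pi/2} \<theta> *\<^sub>R Gd \<theta> w \<partial>lborel) = Gf (pi/2) w - Gf 0 w"
  proof (rule integral_FTC_atLeastAtMost)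
    show "0 \<le> pi/2" by simp
    show "\<And>x. 0 \<le> x \<Longrightarrow> x \<le> pi/2 \<Longrightarrow> ((\<lambda>\<theta>. Gf \<theta> w) has_vector_derivative Gd x w) (at x within {0..pi/2})"
      using Gd_deriv by (simp add: has_real_derivative_iff_has_vector_derivative[symmetric] has_field_derivative_at_within)
    show "continuous_on {0..pi/2} (\<lambda>\<theta>. Gd \<theta> w)" by (rule Gd_cont)
  qed
  then show ?thesis by simp
qed

lemma integrable_ind: "integrable lborel (indicator {0..pi/2} :: real \<Rightarrow> real)"
  using borel_integrable_atLeastAtMost'[of 0 "pi/2" "\<lambda>_. 1::real"] unfolding set_integrable_def by simp

lemma comparison_soft:
  assumes cov: "\<And>s r. s \<in> T \<Longrightarrow> r \<in> T \<Longrightarrow> (\<Sum>j\<in>J. v s j * v r j) \<le> (\<Sum>i\<in>I. u s i * u r i) + a"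
    and diag: "\<And>s. s \<in> T \<Longrightarrow> (\<Sum>j\<in>J. v s j * v s j) = (\<Sum>i\<in>I. u s i * u s i) + a"
  shows "exp (a/2) * (\<integral>x. (\<Sum>s\<in>T. exp (\<beta> * lin_u x s)) powr (1/\<beta>) \<partial>gauss I)
     \<le> (\<integral>y. (\<Sum>s\<in>T. exp (\<beta> * lin_v y s)) powr (1/\<beta>) \<partial>gauss J)"
proof -
  interpret P: pair_sigma_finite "Om I J" lborel
    by (simp add: pair_sigma_finite_def prob_space_imp_sigma_finite prob_Om lborel.sigma_finite_measure_axioms)
  have G1: "Gf (pi/2) w = exp (a/2) * (\<Sum>s\<in>T. exp (\<beta> * lin_u (fst w) s)) powr (1/\<beta>)" for w
    unfolding Gf_def Sc_def Zc_def by simp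
  have G0: "Gf 0 w = (\<Sum>s\<in>T. exp (\<beta> * lin_v (snd w) s)) powr (1/\<beta>)" for w
    unfolding Gf_def Sc_def Zc_def by simp
  have e1: "(\<integral>w. Gf (pi/2) w \<partial>Om I J) = exp (a/2) * (\<integral>x. (\<Sum>s\<in>T. exp (\<beta> * lin_u x s)) powr (1/\<beta>) \<partial>gauss I)"
    unfolding G1 by (subst integral_Om_fst[where f="\<lambda>x. exp (a/2) * (\<Sum>s\<in>T. exp (\<beta> * lin_u x s)) powr (1/\<beta>)"]) auto
  have e0: "(\<integral>w. Gf 0 w \<partial>Om I J) = (\<integral>y. (\<Sum>s\<in>T. exp (\<beta> * lin_v y s)) powr (1/\<beta>) \<partial>gauss J)"
    unfolding G0 by (subst integral_Om_snd[where f="\<lambda>y. (\<Sum>s\<in>T. exp (\<beta> * lin_v y s)) powr (1/\<beta>)"]) auto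
  have mGf[measurable]: "Gf x \<in> borel_measurable (Om I J)" for x unfolding Gf_def by measurable
  have iG: "integrable (Om I J) (Gf x)" for x
    by (rule integrable_Om_ugood[OF finI finJ ug_Gf mGf])
  define F where "F = (\<lambda>(w, \<theta>). indicator {0..pi/2} \<theta> * Gd \<theta> w)"
  have mF[measurable]: "F \<in> borel_measurable (Om I J \<Otimes>\<^sub>M lborel)"
    unfolding F_def Gd_def by measurable
  obtain C K where CK: "\<And>x w. \<bar>Gd x w\<bar> \<le> C * exp (K * Nrm I J w)"
    using ug_Gd unfolding ugood_def by blast
  have iF: "integrable (Om I J \<Otimes>\<^sub>M lborel) F"
  proof (rule Bochner_Integration.integrable_bound)
    show "integrable (Om I J \<Otimes>\<^sub>M lborel) (\<lambda>p. (C * exp (K * Nrm I J (fst p))) * indicator {0..pi/2} (snd p))"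
      by (rule integrable_pair_product[where f="\<lambda>w. C * exp (K * Nrm I J w)" and g="indicator {0..pi/2}"])
         (auto simp: P.pair_sigma_finite_axioms integrable_ind integrable_Om_exp[OF finI finJ])
    show "AE p in Om I J \<Otimes>\<^sub>M lborel. norm (F p) \<le> norm (C * exp (K * Nrm I J (fst p)) * indicator {0..pi/2} (snd p))"
    proof (intro AE_I2)
      fix p :: "(('i \<Rightarrow> real) \<times> ('j \<Rightarrow> real)) \<times> real"
      obtain w \<theta> where p: "p = (w, \<theta>)" by (cases p)
      have "\<bar>Gd \<theta> w\<bar> \<le> \<bar>C * exp (K * Nrm I J w)\<bar>" using CK[of \<theta> w] by linarith
      then show "norm (F p) \<le> norm (C * exp (K * Nrm I J (fst p)) * indicator {0..pi/2} (snd p))"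
        unfolding p F_def by (auto simp: indicator_def abs_mult)
    qed
  qed measurable
  have "(\<integral>w. Gf (pi/2) w \<partial>Om I J) - (\<integral>w. Gf 0 w \<partial>Om I J) = (\<integral>w. Gf (pi/2) w - Gf 0 w \<partial>Om I J)"
    using iG by (simp add: Bochner_Integration.integral_diff)
  also have "\<dots> = (\<integral>w. (\<integral>\<theta>. F (w, \<theta>) \<partial>lborel) \<partial>Om I J)"
    unfolding ftc F_def by simp
  also have "\<dots> = integral\<^sup>L (Om I J \<Otimes>\<^sub>M lborel) F"
    by (rule P.integral_fst'[OF iF])
  also have "\<dots> = (\<integral>\<theta>. (\<integral>w. F (w, \<theta>) \<partial>Om I J) \<partial>lborel)"
    using P.integral_snd[of "\<lambda>w \<theta>. indicator {0..pi/2} \<theta> * Gd \<theta> w"] iF unfolding F_def by simp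
  also have "\<dots> = (\<integral>\<theta>. indicator {0..pi/2} \<theta> * (\<integral>w. Gd \<theta> w \<partial>Om I J) \<partial>lborel)"
    unfolding F_def by simp
  also have "\<dots> \<le> 0"
  proof -
    have "0 \<le> (\<integral>\<theta>. - (indicator {0..pi/2} \<theta> * (\<integral>w. Gd \<theta> w \<partial>Om I J)) \<partial>lborel)"
    proof (intro integral_nonneg_AE AE_I2)
      fix \<theta> :: real
      show "0 \<le> - (indicator {0..pi/2} \<theta> * (\<integral>w. Gd \<theta> w \<partial>Om I J))"
        using Gd_int_nonpos[OF cov diag, of \<theta>] by (auto simp: indicator_def)
    qed
    then show ?thesis by simp
  qed
  finally show ?thesis unfolding e1 e0 by simp
qed

end




lemma comparison_soft':
  fixes u :: "'t \<Rightarrow> 'i \<Rightarrow> real" and v :: "'t \<Rightarrow> 'j \<Rightarrow> real"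
  assumes fin: "finite I" "finite J" "finite T" "T \<noteq> {}" and b: "1 < \<beta>"
    and cov: "\<And>s r. s \<in> T \<Longrightarrow> r \<in> T \<Longrightarrow> (\<Sum>j\<in>J. v s j * v r j) \<le> (\<Sum>i\<in>I. u s i * u r i) + a"
    and diag: "\<And>s. s \<in> T \<Longrightarrow> (\<Sum>j\<in>J. v s j * v s j) = (\<Sum>i\<in>I. u s i * u s i) + a"
  shows "exp (a/2) * (\<integral>x. (\<Sum>s\<in>T. exp (\<beta> * (\<Sum>i\<in>I. x i * u s i))) powr (1/\<beta>) \<partial>gauss I)
     \<le> (\<integral>y. (\<Sum>s\<in>T. exp (\<beta> * (\<Sum>j\<in>J. y j * v s j))) powr (1/\<beta>) \<partial>gauss J)"
  using comparison_soft[OF fin b cov diag] lin_u_def[OF fin b] lin_v_def[OF fin b] by simp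

lemma Max_ge_exp: "finite T \<Longrightarrow> T \<noteq> {} \<Longrightarrow> 0 < \<beta> \<Longrightarrow>
   exp (\<beta> * Max (f ` T)) \<le> (\<Sum>s\<in>T. exp (\<beta> * (f::'t \<Rightarrow> real) s))"
proof -
  assume T: "finite T" "T \<noteq> {}" and b: "0 < \<beta>"
  obtain t where t: "t \<in> T" "f t = Max (f ` T)"
    using T by (metis (mono_tags, lifting) Max_in finite_imageI image_iff image_is_empty)
  have "exp (\<beta> * f t) \<le> (\<Sum>s\<in>T. exp (\<beta> * f s))" using T t by (intro member_le_sum[of t T "\<lambda>s. exp (\<beta> * f s)"]) auto
  then show ?thesis using t by simp
qed

lemma soft_bounds:
  fixes f :: "'t \<Rightarrow> real"
  assumes T: "finite T" "T \<noteq> {}" and b: "0 < \<beta>"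
  shows "exp (Max (f ` T)) \<le> (\<Sum>s\<in>T. exp (\<beta> * f s)) powr (1/\<beta>)"
    and "(\<Sum>s\<in>T. exp (\<beta> * f s)) powr (1/\<beta>) \<le> real (card T) powr (1/\<beta>) * exp (Max (f ` T))"
proof -
  let ?M = "Max (f ` T)"
  have Spos: "0 < (\<Sum>s\<in>T. exp (\<beta> * f s))" using T by (intro sum_pos) auto
  have "exp (\<beta> * ?M) powr (1/\<beta>) \<le> (\<Sum>s\<in>T. exp (\<beta> * f s)) powr (1/\<beta>)"
    using Max_ge_exp[OF T b, of f] b by (intro powr_mono2) auto
  moreover have "exp (\<beta> * ?M) powr (1/\<beta>) = exp ?M" using b by (simp add: powr_def)
  ultimately show "exp ?M \<le> (\<Sum>s\<in>T. exp (\<beta> * f s)) powr (1/\<beta>)" by simp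
  have "(\<Sum>s\<in>T. exp (\<beta> * f s)) \<le> (\<Sum>s\<in>T. exp (\<beta> * ?M))"
    using T b by (intro sum_mono) auto
  also have "\<dots> = real (card T) * exp (\<beta> * ?M)" by simp
  finally have "(\<Sum>s\<in>T. exp (\<beta> * f s)) powr (1/\<beta>) \<le> (real (card T) * exp (\<beta> * ?M)) powr (1/\<beta>)"
    using Spos b by (intro powr_mono2) auto
  also have "\<dots> = real (card T) powr (1/\<beta>) * exp (\<beta> * ?M) powr (1/\<beta>)"
    using powr_mult[of "real (card T)" "exp (\<beta> * ?M)" "1/\<beta>"] by simp
  also have "exp (\<beta> * ?M) powr (1/\<beta>) = exp ?M" using b by (simp add: powr_def)
  finally show "(\<Sum>s\<in>T. exp (\<beta> * f s)) powr (1/\<beta>) \<le> real (card T) powr (1/\<beta>) * exp ?M" .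
qed

lemma lin_abs_bound:
  fixes x w :: "'i \<Rightarrow> real"
  assumes "\<And>i. i \<in> I \<Longrightarrow> \<bar>w i\<bar> \<le> R"
  shows "\<bar>\<Sum>i\<in>I. x i * w i\<bar> \<le> R * (\<Sum>i\<in>I. \<bar>x i\<bar>)"
proof -
  have "\<bar>\<Sum>i\<in>I. x i * w i\<bar> \<le> (\<Sum>i\<in>I. \<bar>x i * w i\<bar>)" by (rule sum_abs)
  also have "\<dots> \<le> (\<Sum>i\<in>I. \<bar>x i\<bar> * R)"
    using assms by (intro sum_mono) (simp add: abs_mult mult_left_mono)
  finally show ?thesis by (simp add: sum_distrib_left mult_ac)
qed

lemma finite_bound_ex:
  fixes u :: "'t \<Rightarrow> 'i \<Rightarrow> real"
  assumes "finite T" "finite I"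
  shows "\<exists>R\<ge>0. \<forall>t\<in>T. \<forall>i\<in>I. \<bar>u t i\<bar> \<le> R"
proof (intro exI[of _ "\<Sum>t\<in>T. \<Sum>i\<in>I. \<bar>u t i\<bar>"] conjI ballI)
  show "0 \<le> (\<Sum>t\<in>T. \<Sum>i\<in>I. \<bar>u t i\<bar>)" by (intro sum_nonneg) auto
  fix t i assume "t \<in> T" "i \<in> I"
  then have "\<bar>u t i\<bar> \<le> (\<Sum>i\<in>I. \<bar>u t i\<bar>)" using assms by (intro member_le_sum) auto
  also have "\<dots> \<le> (\<Sum>t\<in>T. \<Sum>i\<in>I. \<bar>u t i\<bar>)" using assms \<open>t \<in> T\<close> by (intro member_le_sum sum_nonneg) auto
  finally show "\<bar>u t i\<bar> \<le> (\<Sum>t\<in>T. \<Sum>i\<in>I. \<bar>u t i\<bar>)" .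
qed

lemma integrable_soft:
  fixes u :: "'t \<Rightarrow> 'i \<Rightarrow> real"
  assumes "finite I" "finite T" "T \<noteq> {}" "0 < \<beta>"
  shows "integrable (gauss I) (\<lambda>x. exp (Max ((\<lambda>s. \<Sum>i\<in>I. x i * u s i) ` T)))"
    and "integrable (gauss I) (\<lambda>x. (\<Sum>s\<in>T. exp (\<beta> * (\<Sum>i\<in>I. x i * u s i))) powr (1/\<beta>))"
proof -
  obtain R where R: "0 \<le> R" "\<And>t i. t \<in> T \<Longrightarrow> i \<in> I \<Longrightarrow> \<bar>u t i\<bar> \<le> R"
    using finite_bound_ex[OF assms(2,1), of u] by blast
  have mx: "Max ((\<lambda>s. \<Sum>i\<in>I. x i * u s i) ` T) \<le> R * (\<Sum>i\<in>I. \<bar>x i\<bar>)" for x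
  proof -
    have "Max ((\<lambda>s. \<Sum>i\<in>I. x i * u s i) ` T) \<in> (\<lambda>s. \<Sum>i\<in>I. x i * u s i) ` T"
      using assms by (intro Max_in) auto
    then obtain s where "s \<in> T" "Max ((\<lambda>s. \<Sum>i\<in>I. x i * u s i) ` T) = (\<Sum>i\<in>I. x i * u s i)" by auto
    then show ?thesis using lin_abs_bound[of I "u s" R x] R by (simp add: abs_le_iff)
  qed
  have meas: "(\<lambda>x. Max ((\<lambda>s. \<Sum>i\<in>I. x i * u s i) ` T)) \<in> borel_measurable (gauss I)"
    unfolding gauss_def using assms by measurable
  show i1: "integrable (gauss I) (\<lambda>x. exp (Max ((\<lambda>s. \<Sum>i\<in>I. x i * u s i) ` T)))"
  proof (rule gauss_bound_integrable[OF assms(1), where C=1 and K=R])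
    show "(\<lambda>x. exp (Max ((\<lambda>s. \<Sum>i\<in>I. x i * u s i) ` T))) \<in> borel_measurable (gauss I)"
      using meas by measurable
    show "\<bar>exp (Max ((\<lambda>s. \<Sum>i\<in>I. x i * u s i) ` T))\<bar> \<le> 1 * exp (R * (\<Sum>i\<in>I. \<bar>x i\<bar>))" for x
      using mx[of x] by simp
  qed
  show "integrable (gauss I) (\<lambda>x. (\<Sum>s\<in>T. exp (\<beta> * (\<Sum>i\<in>I. x i * u s i))) powr (1/\<beta>))"
  proof (rule Bochner_Integration.integrable_bound[OF integrable_mult_right[OF i1, of "real (card T) powr (1/\<beta>)"]])
    show "(\<lambda>x. (\<Sum>s\<in>T. exp (\<beta> * (\<Sum>i\<in>I. x i * u s i))) powr (1/\<beta>)) \<in> borel_measurable (gauss I)"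
      unfolding gauss_def using assms by measurable
    show "AE x in gauss I. norm ((\<Sum>s\<in>T. exp (\<beta> * (\<Sum>i\<in>I. x i * u s i))) powr (1/\<beta>))
       \<le> norm (real (card T) powr (1/\<beta>) * exp (Max ((\<lambda>s. \<Sum>i\<in>I. x i * u s i) ` T)))"
      using soft_bounds(2)[OF assms(2,3,4)] by (intro AE_I2) simp
  qed
qed

lemma comparison_max:
  fixes u :: "'t \<Rightarrow> 'i \<Rightarrow> real" and v :: "'t \<Rightarrow> 'j \<Rightarrow> real"
  assumes fin: "finite I" "finite J" "finite T" "T \<noteq> {}"
    and cov: "\<And>s r. s \<in> T \<Longrightarrow> r \<in> T \<Longrightarrow> (\<Sum>j\<in>J. v s j * v r j) \<le> (\<Sum>i\<in>I. u s i * u r i) + a"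
    and diag: "\<And>s. s \<in> T \<Longrightarrow> (\<Sum>j\<in>J. v s j * v s j) = (\<Sum>i\<in>I. u s i * u s i) + a"
  shows "exp (a/2) * (\<integral>x. exp (Max ((\<lambda>s. \<Sum>i\<in>I. x i * u s i) ` T)) \<partial>gauss I)
     \<le> (\<integral>y. exp (Max ((\<lambda>s. \<Sum>j\<in>J. y j * v s j) ` T)) \<partial>gauss J)"
proof -
  let ?L = "exp (a/2) * (\<integral>x. exp (Max ((\<lambda>s. \<Sum>i\<in>I. x i * u s i) ` T)) \<partial>gauss I)"
  let ?R = "(\<integral>y. exp (Max ((\<lambda>s. \<Sum>j\<in>J. y j * v s j) ` T)) \<partial>gauss J)"
  have step: "?L \<le> real (card T) powr (1/\<beta>) * ?R" if b: "1 < \<beta>" for \<beta>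
  proof -
    have b0: "0 < \<beta>" using b by simp
    have "?L \<le> exp (a/2) * (\<integral>x. (\<Sum>s\<in>T. exp (\<beta> * (\<Sum>i\<in>I. x i * u s i))) powr (1/\<beta>) \<partial>gauss I)"
      using soft_bounds(1)[OF fin(3,4) b0] integrable_soft[OF fin(1,3,4) b0]
      by (intro mult_left_mono integral_mono) auto
    also have "\<dots> \<le> (\<integral>y. (\<Sum>s\<in>T. exp (\<beta> * (\<Sum>j\<in>J. y j * v s j))) powr (1/\<beta>) \<partial>gauss J)"
      by (rule comparison_soft'[OF fin b cov diag])
    also have "\<dots> \<le> (\<integral>y. real (card T) powr (1/\<beta>) * exp (Max ((\<lambda>s. \<Sum>j\<in>J. y j * v s j) ` T)) \<partial>gauss J)"
      using soft_bounds(2)[OF fin(3,4) b0] integrable_soft[OF fin(2,3,4) b0, of v]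
      by (intro integral_mono) auto
    also have "\<dots> = real (card T) powr (1/\<beta>) * ?R" by simp
    finally show ?thesis .
  qed
  have l1: "(\<lambda>n. 1 / (real n + 2)) \<longlonglongrightarrow> 0"
    using LIMSEQ_ignore_initial_segment[OF lim_inverse_n', of 2] by (simp add: add.commute)
  have l2: "(\<lambda>n. real (card T) powr (1 / (real n + 2))) \<longlonglongrightarrow> real (card T) powr 0"
    by (rule tendsto_powr[OF tendsto_const l1]) (use fin in simp)
  have lim: "(\<lambda>n. real (card T) powr (1 / (real n + 2)) * ?R) \<longlonglongrightarrow> real (card T) powr 0 * ?R"
    by (rule tendsto_mult_right[OF l2])
  have "?L \<le> real (card T) powr 0 * ?R"
    by (rule LIMSEQ_le_const[OF lim]) (use step in auto)
  then show ?thesis using fin by simp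
qed




lemma dense_countable:
  fixes u :: "'t \<Rightarrow> 'i \<Rightarrow> real"
  assumes I: "finite I" and T: "T \<noteq> {}"
  shows "\<exists>D. countable D \<and> D \<subseteq> T \<and> D \<noteq> {} \<and> (\<forall>t\<in>T. \<forall>\<delta>>0. \<exists>t'\<in>D. \<forall>i\<in>I. \<bar>u t' i - u t i\<bar> < \<delta>)"
proof -
  define Q where "Q = Pi\<^sub>E I (\<lambda>_. \<rat> :: real set)"
  define good where "good = (\<lambda>q (n::nat). \<exists>t\<in>T. \<forall>i\<in>I. \<bar>u t i - q i\<bar> < 1 / Suc n)"
  define pick where "pick = (\<lambda>q (n::nat). SOME t. t \<in> T \<and> (\<forall>i\<in>I. \<bar>u t i - q i\<bar> < 1 / Suc n))"
  define D where "D = (\<lambda>(q, n). pick q n) ` {(q, n). q \<in> Q \<and> good q n}"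
  have cQ: "countable Q" unfolding Q_def using I by (intro countable_PiE countable_rat)
  have cD: "countable D"
  proof -
    have "{(q, n). q \<in> Q \<and> good q n} \<subseteq> Q \<times> (UNIV :: nat set)" by auto
    moreover have "countable (Q \<times> (UNIV :: nat set))" using cQ by (intro countable_SIGMA) auto
    ultimately have "countable {(q, n). q \<in> Q \<and> good q n}"
      by (rule countable_subset)
    then show ?thesis unfolding D_def by simp
  qed
  have pick: "pick q n \<in> T \<and> (\<forall>i\<in>I. \<bar>u (pick q n) i - q i\<bar> < 1 / Suc n)" if "good q n" for q n
    using that unfolding good_def pick_def Bex_def by (rule someI_ex)
  have DT: "D \<subseteq> T"
  proof
    fix t assume "t \<in> D"
    then obtain q n where "good q n" "t = pick q n" unfolding D_def by auto
    then show "t \<in> T" using pick by blast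
  qed
  have dense: "\<exists>t'\<in>D. \<forall>i\<in>I. \<bar>u t' i - u t i\<bar> < \<delta>" if t: "t \<in> T" and d: "0 < \<delta>" for t \<delta>
  proof -
    obtain n where n: "inverse (real (Suc n)) < \<delta> / 2"
      using reals_Archimedean[of "\<delta>/2"] d by auto
    have ex: "\<exists>r\<in>\<rat>. u t i < r \<and> r < u t i + 1 / Suc n" for i
      by (rule Rats_dense_in_real) simp
    define q where "q = (\<lambda>i\<in>I. SOME r. r \<in> \<rat> \<and> u t i < r \<and> r < u t i + 1 / Suc n)"
    have qi: "q i \<in> \<rat> \<and> u t i < q i \<and> q i < u t i + 1 / Suc n" if "i \<in> I" for i
      using someI_ex[OF ex[of i, unfolded Bex_def]] that unfolding q_def by simp
    have qQ: "q \<in> Q" unfolding Q_def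
    proof (rule PiE_I)
      show "\<And>i. i \<in> I \<Longrightarrow> q i \<in> \<rat>" using qi by blast
      show "\<And>i. i \<notin> I \<Longrightarrow> q i = undefined" unfolding q_def by simp
    qed
    have "\<bar>u t i - q i\<bar> < 1 / Suc n" if "i \<in> I" for i
    proof -
      have "u t i < q i" "q i < u t i + 1 / Suc n" using qi[OF that] by auto
      then show ?thesis unfolding abs_less_iff by linarith
    qed
    then have gq: "good q n" unfolding good_def using t by blast
    have "(q, n) \<in> {(q, n). q \<in> Q \<and> good q n}" using qQ gq by simp
    then have pD: "pick q n \<in> D" unfolding D_def by (rule rev_image_eqI) simp
    have "\<bar>u (pick q n) i - u t i\<bar> < \<delta>" if i: "i \<in> I" for i
    proof -
      have "\<bar>u (pick q n) i - q i\<bar> < 1 / Suc n" using pick[OF gq] i by auto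
      moreover have "\<bar>q i - u t i\<bar> < 1 / Suc n" using qi[OF i] by auto
      ultimately have "\<bar>u (pick q n) i - u t i\<bar> < 2 / Suc n" by linarith
      also have "\<dots> < \<delta>" using n by (simp add: field_simps)
      finally show ?thesis .
    qed
    then show ?thesis using pD by blast
  qed
  have Dne: "D \<noteq> {}"
  proof -
    obtain t where "t \<in> T" using T by auto
    then obtain t' where "t' \<in> D" using dense[of t 1] by auto
    then show ?thesis by auto
  qed
  show ?thesis
  proof (intro exI[of _ D] conjI ballI allI impI)
    show "countable D" by (rule cD)
    show "D \<subseteq> T" by (rule DT)
    show "D \<noteq> {}" by (rule Dne)
    fix t and \<delta> :: real assume "t \<in> T" "0 < \<delta>"
    then show "\<exists>t'\<in>D. \<forall>i\<in>I. \<bar>u t' i - u t i\<bar> < \<delta>" by (rule dense)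
  qed
qed

lemma sup_approx_seq:
  fixes u :: "'t \<Rightarrow> 'i \<Rightarrow> real"
  assumes I: "finite I" and T: "T \<noteq> {}" and R: "\<And>t i. t \<in> T \<Longrightarrow> i \<in> I \<Longrightarrow> \<bar>u t i\<bar> \<le> R"
  shows "\<exists>F. (\<forall>k. finite (F k) \<and> F k \<noteq> {} \<and> F k \<subseteq> T) \<and>
     (\<forall>x. (\<lambda>k. Max ((\<lambda>t. \<Sum>i\<in>I. x i * u t i) ` F k)) \<longlonglongrightarrow> (SUP t\<in>T. \<Sum>i\<in>I. x i * u t i))"
proof -
  obtain D where D: "countable D" "D \<subseteq> T" "D \<noteq> {}" and dense: "\<And>t \<delta>. t \<in> T \<Longrightarrow> 0 < \<delta> \<Longrightarrow> \<exists>t'\<in>D. \<forall>i\<in>I. \<bar>u t' i - u t i\<bar> < \<delta>"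
    using dense_countable[OF I T, of u] by blast
  define F where "F = (\<lambda>k. from_nat_into D ` {..k})"
  have F: "finite (F k) \<and> F k \<noteq> {} \<and> F k \<subseteq> T" for k
    unfolding F_def using D from_nat_into[OF D(3)] by auto
  have conv: "(\<lambda>k. Max ((\<lambda>t. \<Sum>i\<in>I. x i * u t i) ` F k)) \<longlonglongrightarrow> (SUP t\<in>T. \<Sum>i\<in>I. x i * u t i)" for x
  proof (rule metric_LIMSEQ_I)
    fix \<epsilon> :: real assume e: "0 < \<epsilon>"
    let ?g = "\<lambda>t. \<Sum>i\<in>I. x i * u t i"
    let ?s = "SUP t\<in>T. ?g t"
    let ?N = "\<Sum>i\<in>I. \<bar>x i\<bar>"
    have gb: "\<bar>?g t\<bar> \<le> R * ?N" if "t \<in> T" for t using lin_abs_bound[of I "u t" R x] R that by auto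
    have bdd: "bdd_above (?g ` T)" using gb by (intro bdd_aboveI[of _ "R * ?N"]) (auto simp: abs_le_iff)
    have le: "Max (?g ` F k) \<le> ?s" for k
    proof -
      have "Max (?g ` F k) \<in> ?g ` F k" using F[of k] by (intro Max_in) auto
      then obtain t where t: "t \<in> F k" "Max (?g ` F k) = ?g t" by auto
      then have "t \<in> T" using F[of k] by auto
      then have "?g t \<le> ?s" using bdd by (rule cSUP_upper)
      then show ?thesis using t by simp
    qed
    obtain t where t: "t \<in> T" "?s - \<epsilon>/2 < ?g t"
      using less_cSUP_iff[OF T bdd, of "?s - \<epsilon>/2"] e by auto
    define \<delta> where "\<delta> = \<epsilon> / (2 * (?N + 1))"
    have N0: "0 \<le> ?N" by (intro sum_nonneg) auto
    have Np: "0 < ?N + 1" by (intro add_nonneg_pos sum_nonneg) auto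
    then have "0 < 2 * (?N + 1)" by simp
    then have d0: "0 < \<delta>" unfolding \<delta>_def using e by (intro divide_pos_pos)
    obtain t' where t': "t' \<in> D" "\<And>i. i \<in> I \<Longrightarrow> \<bar>u t' i - u t i\<bar> < \<delta>"
      using dense[OF t(1) d0] by blast
    have "(\<Sum>i\<in>I. x i * (u t' i - u t i)) = ?g t' - ?g t"
      by (simp add: sum_subtractf[symmetric] right_diff_distrib)
    then have "\<bar>?g t' - ?g t\<bar> = \<bar>\<Sum>i\<in>I. x i * (u t' i - u t i)\<bar>" by simp
    also have "\<dots> \<le> \<delta> * ?N" using t'(2) by (intro lin_abs_bound) (simp add: less_imp_le)
    also have "\<dots> < \<epsilon>/2"
    proof -
      have Nn: "?N + 1 \<noteq> 0" using Np by auto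
      have "\<delta> * ?N < \<delta> * (?N + 1)" using d0 by simp
      also have "\<delta> * (?N + 1) = \<epsilon>/2" unfolding \<delta>_def using Nn by (simp add: field_simps)
      finally show ?thesis .
    qed
    finally have gt': "?s - \<epsilon> < ?g t'" using t(2) by linarith
    obtain m where m: "from_nat_into D m = t'" using from_nat_into_surj[OF D(1) t'(1)] by blast
    show "\<exists>no. \<forall>k\<ge>no. dist (Max (?g ` F k)) ?s < \<epsilon>"
    proof (intro exI allI impI)
      fix k assume k: "m \<le> k"
      have "m \<in> {..k}" using k by simp
      then have "t' \<in> F k" unfolding F_def using m by (metis image_eqI)
      then have "?g t' \<in> ?g ` F k" by (rule imageI)
      then have "?g t' \<le> Max (?g ` F k)" using F[of k] by (intro Max_ge) auto
      then have a1: "?s - \<epsilon> < Max (?g ` F k)" using gt' by linarith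
      have a2: "Max (?g ` F k) \<le> ?s" by (rule le)
      show "dist (Max (?g ` F k)) ?s < \<epsilon>" unfolding dist_real_def abs_less_iff using a1 a2 e by linarith
    qed
  qed
  show ?thesis
    by (rule exI[of _ F], intro conjI allI) (use F conv in auto)
qed




lemma Max_scale:
  fixes g :: "'t \<Rightarrow> real"
  assumes "0 \<le> c" "finite F" "F \<noteq> {}"
  shows "Max ((\<lambda>t. c * g t) ` F) = c * Max (g ` F)"
proof -
  have "mono ((*) c)" using assms(1) by (simp add: mono_def mult_left_mono)
  from mono_Max_commute[OF this, of "g ` F"] assms show ?thesis by (simp add: image_image)
qed

lemma sum_scale: "(\<Sum>i\<in>I. x i * (c * u t i)) = c * (\<Sum>i\<in>I. x i * u t i :: real)"
  by (simp add: sum_distrib_left mult_ac)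

lemma sup_integral_approx:
  fixes u :: "'t \<Rightarrow> 'i \<Rightarrow> real"
  assumes I: "finite I" and T: "T \<noteq> {}" and R: "\<And>t i. t \<in> T \<Longrightarrow> i \<in> I \<Longrightarrow> \<bar>u t i\<bar> \<le> R" and c: "0 \<le> c"
  shows "integrable (gauss I) (\<lambda>x. exp (c * (SUP t\<in>T. \<Sum>i\<in>I. x i * u t i)))"
    and "\<And>F. finite F \<Longrightarrow> F \<noteq> {} \<Longrightarrow> F \<subseteq> T \<Longrightarrow>
      (\<integral>x. exp (c * Max ((\<lambda>t. \<Sum>i\<in>I. x i * u t i) ` F)) \<partial>gauss I) \<le> (\<integral>x. exp (c * (SUP t\<in>T. \<Sum>i\<in>I. x i * u t i)) \<partial>gauss I)"
    and "\<exists>F. (\<forall>k. finite (F k) \<and> F k \<noteq> {} \<and> F k \<subseteq> T) \<and>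
      (\<lambda>k. \<integral>x. exp (c * Max ((\<lambda>t. \<Sum>i\<in>I. x i * u t i) ` F k)) \<partial>gauss I) \<longlonglongrightarrow> (\<integral>x. exp (c * (SUP t\<in>T. \<Sum>i\<in>I. x i * u t i)) \<partial>gauss I)"
proof -
  let ?g = "\<lambda>x t. \<Sum>i\<in>I. x i * u t i"
  let ?N = "\<lambda>x. \<Sum>i\<in>I. \<bar>x i\<bar>"
  obtain F0 where F0: "\<And>k. finite (F0 k) \<and> F0 k \<noteq> {} \<and> F0 k \<subseteq> T"
    and conv: "\<And>x. (\<lambda>k. Max (?g x ` F0 k)) \<longlonglongrightarrow> (SUP t\<in>T. ?g x t)"
  proof -
    have "\<exists>F. (\<forall>k. finite (F k) \<and> F k \<noteq> {} \<and> F k \<subseteq> T) \<and>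
     (\<forall>x. (\<lambda>k. Max ((\<lambda>t. \<Sum>i\<in>I. x i * u t i) ` F k)) \<longlonglongrightarrow> (SUP t\<in>T. \<Sum>i\<in>I. x i * u t i))"
      by (rule sup_approx_seq[OF I T], rule R)
    then show ?thesis using that by blast
  qed
  have gb: "\<bar>?g x t\<bar> \<le> R * ?N x" if "t \<in> T" for x t using lin_abs_bound[of I "u t" R x] R that by auto
  have bdd: "bdd_above (?g x ` T)" for x using gb by (intro bdd_aboveI[of _ "R * ?N x"]) (auto simp: abs_le_iff)
  have supb: "(SUP t\<in>T. ?g x t) \<le> R * ?N x" for x
    using gb T by (intro cSUP_least) (auto simp: abs_le_iff)
  have maxle: "Max (?g x ` F) \<le> (SUP t\<in>T. ?g x t)" if F: "finite F" "F \<noteq> {}" "F \<subseteq> T" for x F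
  proof -
    have "Max (?g x ` F) \<in> ?g x ` F" using F by (intro Max_in) auto
    then obtain t where t: "t \<in> F" "Max (?g x ` F) = ?g x t" by auto
    then have "t \<in> T" using F by auto
    then have "?g x t \<le> (SUP t\<in>T. ?g x t)" using bdd by (rule cSUP_upper)
    then show ?thesis using t by simp
  qed
  have mMax[measurable]: "(\<lambda>x. Max (?g x ` F)) \<in> borel_measurable (gauss I)" if "finite F" for F
    unfolding gauss_def using that I by measurable
  have mSup[measurable]: "(\<lambda>x. SUP t\<in>T. ?g x t) \<in> borel_measurable (gauss I)"
    by (rule borel_measurable_LIMSEQ_real[OF conv mMax]) (use F0 in auto)
  have ebound: "\<bar>exp (c * y)\<bar> \<le> 1 * exp ((c * R) * ?N x)" if "y \<le> R * ?N x" for x y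
  proof -
    have "c * y \<le> c * (R * ?N x)" using that c by (rule mult_left_mono)
    then show ?thesis by (simp add: mult.assoc)
  qed
  have iSup: "integrable (gauss I) (\<lambda>x. exp (c * (SUP t\<in>T. ?g x t)))"
    by (rule gauss_bound_integrable[OF I _ ebound[OF supb]]) measurable
  show "integrable (gauss I) (\<lambda>x. exp (c * (SUP t\<in>T. \<Sum>i\<in>I. x i * u t i)))" by (rule iSup)
  have iMax: "integrable (gauss I) (\<lambda>x. exp (c * Max (?g x ` F)))" if F: "finite F" "F \<noteq> {}" "F \<subseteq> T" for F
  proof (rule gauss_bound_integrable[OF I])
    show "(\<lambda>x. exp (c * Max (?g x ` F))) \<in> borel_measurable (gauss I)" using F by measurable
    show "\<bar>exp (c * Max (?g x ` F))\<bar> \<le> 1 * exp ((c * R) * ?N x)" for x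
      by (rule ebound) (rule order_trans[OF maxle[OF F] supb])
  qed
  show "\<And>F. finite F \<Longrightarrow> F \<noteq> {} \<Longrightarrow> F \<subseteq> T \<Longrightarrow>
      (\<integral>x. exp (c * Max (?g x ` F)) \<partial>gauss I) \<le> (\<integral>x. exp (c * (SUP t\<in>T. ?g x t)) \<partial>gauss I)"
  proof -
    fix F assume F: "finite F" "F \<noteq> {}" "F \<subseteq> T"
    show "(\<integral>x. exp (c * Max (?g x ` F)) \<partial>gauss I) \<le> (\<integral>x. exp (c * (SUP t\<in>T. ?g x t)) \<partial>gauss I)"
    proof (rule integral_mono[OF iMax[OF F] iSup])
      fix x show "exp (c * Max (?g x ` F)) \<le> exp (c * (SUP t\<in>T. ?g x t))"
        using maxle[OF F, of x] c by (simp add: mult_left_mono)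
    qed
  qed
  have lim: "(\<lambda>k. \<integral>x. exp (c * Max (?g x ` F0 k)) \<partial>gauss I) \<longlonglongrightarrow> (\<integral>x. exp (c * (SUP t\<in>T. ?g x t)) \<partial>gauss I)"
  proof (rule integral_dominated_convergence[where w="\<lambda>x. 1 * exp ((c * R) * ?N x)"])
    show "(\<lambda>x. exp (c * (SUP t\<in>T. ?g x t))) \<in> borel_measurable (gauss I)" by measurable
    show "(\<lambda>x. exp (c * Max (?g x ` F0 k))) \<in> borel_measurable (gauss I)" for k
    proof -
      have [measurable]: "(\<lambda>x. Max (?g x ` F0 k)) \<in> borel_measurable (gauss I)" using F0[of k] by (intro mMax) auto
      show ?thesis by measurable
    qed
    show "integrable (gauss I) (\<lambda>x. 1 * exp ((c * R) * ?N x))" using gauss_exp_integrable[OF I] by simp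
    show "AE x in gauss I. (\<lambda>k. exp (c * Max (?g x ` F0 k))) \<longlonglongrightarrow> exp (c * (SUP t\<in>T. ?g x t))"
      by (intro AE_I2 tendsto_exp tendsto_mult_left conv)
    show "AE x in gauss I. norm (exp (c * Max (?g x ` F0 k))) \<le> 1 * exp ((c * R) * ?N x)" for k
    proof (intro AE_I2)
      fix x
      have Fk: "finite (F0 k)" "F0 k \<noteq> {}" "F0 k \<subseteq> T" using F0[of k] by auto
      have "\<bar>exp (c * Max (?g x ` F0 k))\<bar> \<le> 1 * exp ((c * R) * ?N x)"
        by (rule ebound) (rule order_trans[OF maxle[OF Fk] supb])
      then show "norm (exp (c * Max (?g x ` F0 k))) \<le> 1 * exp ((c * R) * ?N x)" by simp
    qed
  qed
  show "\<exists>F. (\<forall>k. finite (F k) \<and> F k \<noteq> {} \<and> F k \<subseteq> T) \<and>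
      (\<lambda>k. \<integral>x. exp (c * Max ((\<lambda>t. \<Sum>i\<in>I. x i * u t i) ` F k)) \<partial>gauss I) \<longlonglongrightarrow> (\<integral>x. exp (c * (SUP t\<in>T. \<Sum>i\<in>I. x i * u t i)) \<partial>gauss I)"
    by (rule exI[of _ F0], intro conjI allI) (use F0 lim in auto)
qed

lemma comparison_sup:
  fixes u :: "'t \<Rightarrow> 'i \<Rightarrow> real" and v :: "'t \<Rightarrow> 'j \<Rightarrow> real"
  assumes I: "finite I" and J: "finite J" and T: "T \<noteq> {}"
    and Ru: "\<And>t i. t \<in> T \<Longrightarrow> i \<in> I \<Longrightarrow> \<bar>u t i\<bar> \<le> R"
    and Rv: "\<And>t j. t \<in> T \<Longrightarrow> j \<in> J \<Longrightarrow> \<bar>v t j\<bar> \<le> R"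
    and c1: "0 \<le> c1" and c2: "0 \<le> c2"
    and cov: "\<And>s r. s \<in> T \<Longrightarrow> r \<in> T \<Longrightarrow> (\<Sum>j\<in>J. (c2 * v s j) * (c2 * v r j)) \<le> (\<Sum>i\<in>I. (c1 * u s i) * (c1 * u r i)) + a"
    and diag: "\<And>s. s \<in> T \<Longrightarrow> (\<Sum>j\<in>J. (c2 * v s j) * (c2 * v s j)) = (\<Sum>i\<in>I. (c1 * u s i) * (c1 * u s i)) + a"
  shows "exp (a/2) * (\<integral>x. exp (c1 * (SUP t\<in>T. \<Sum>i\<in>I. x i * u t i)) \<partial>gauss I)
     \<le> (\<integral>y. exp (c2 * (SUP t\<in>T. \<Sum>j\<in>J. y j * v t j)) \<partial>gauss J)"
proof -
  obtain F where F: "\<And>k. finite (F k) \<and> F k \<noteq> {} \<and> F k \<subseteq> T"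
    and lim: "(\<lambda>k. \<integral>x. exp (c1 * Max ((\<lambda>t. \<Sum>i\<in>I. x i * u t i) ` F k)) \<partial>gauss I) \<longlonglongrightarrow> (\<integral>x. exp (c1 * (SUP t\<in>T. \<Sum>i\<in>I. x i * u t i)) \<partial>gauss I)"
  proof -
    have "\<exists>F. (\<forall>k. finite (F k) \<and> F k \<noteq> {} \<and> F k \<subseteq> T) \<and>
      (\<lambda>k. \<integral>x. exp (c1 * Max ((\<lambda>t. \<Sum>i\<in>I. x i * u t i) ` F k)) \<partial>gauss I) \<longlonglongrightarrow> (\<integral>x. exp (c1 * (SUP t\<in>T. \<Sum>i\<in>I. x i * u t i)) \<partial>gauss I)"
      by (rule sup_integral_approx(3)[OF I T _ c1], rule Ru)
    then show ?thesis using that by blast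
  qed
  have step: "exp (a/2) * (\<integral>x. exp (c1 * Max ((\<lambda>t. \<Sum>i\<in>I. x i * u t i) ` F k)) \<partial>gauss I)
     \<le> (\<integral>y. exp (c2 * (SUP t\<in>T. \<Sum>j\<in>J. y j * v t j)) \<partial>gauss J)" for k
  proof -
    have Fk: "finite (F k)" "F k \<noteq> {}" "F k \<subseteq> T" using F[of k] by auto
    have e1: "(\<integral>x. exp (c1 * Max ((\<lambda>t. \<Sum>i\<in>I. x i * u t i) ` F k)) \<partial>gauss I)
        = (\<integral>x. exp (Max ((\<lambda>t. \<Sum>i\<in>I. x i * (c1 * u t i)) ` F k)) \<partial>gauss I)"
      unfolding sum_scale Max_scale[OF c1 Fk(1,2)] ..
    have e2: "(\<integral>y. exp (c2 * Max ((\<lambda>t. \<Sum>j\<in>J. y j * v t j) ` F k)) \<partial>gauss J)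
        = (\<integral>y. exp (Max ((\<lambda>t. \<Sum>j\<in>J. y j * (c2 * v t j)) ` F k)) \<partial>gauss J)"
      unfolding sum_scale Max_scale[OF c2 Fk(1,2)] ..
    have "exp (a/2) * (\<integral>x. exp (Max ((\<lambda>t. \<Sum>i\<in>I. x i * (c1 * u t i)) ` F k)) \<partial>gauss I)
       \<le> (\<integral>y. exp (Max ((\<lambda>t. \<Sum>j\<in>J. y j * (c2 * v t j)) ` F k)) \<partial>gauss J)"
    proof (rule comparison_max[OF I J Fk(1,2)])
      fix s r assume "s \<in> F k" "r \<in> F k"
      then have "s \<in> T" "r \<in> T" using Fk(3) by auto
      then show "(\<Sum>j\<in>J. (c2 * v s j) * (c2 * v r j)) \<le> (\<Sum>i\<in>I. (c1 * u s i) * (c1 * u r i)) + a" by (rule cov)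
    next
      fix s assume "s \<in> F k"
      then have "s \<in> T" using Fk(3) by auto
      then show "(\<Sum>j\<in>J. (c2 * v s j) * (c2 * v s j)) = (\<Sum>i\<in>I. (c1 * u s i) * (c1 * u s i)) + a" by (rule diag)
    qed
    also have "\<dots> \<le> (\<integral>y. exp (c2 * (SUP t\<in>T. \<Sum>j\<in>J. y j * v t j)) \<partial>gauss J)"
      unfolding e2[symmetric] by (rule sup_integral_approx(2)[OF J T _ c2 Fk(1,2,3)], rule Rv)
    finally show ?thesis unfolding e1 .
  qed
  have "(\<lambda>k. exp (a/2) * (\<integral>x. exp (c1 * Max ((\<lambda>t. \<Sum>i\<in>I. x i * u t i) ` F k)) \<partial>gauss I))
     \<longlonglongrightarrow> exp (a/2) * (\<integral>x. exp (c1 * (SUP t\<in>T. \<Sum>i\<in>I. x i * u t i)) \<partial>gauss I)"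
    by (rule tendsto_mult_left[OF lim])
  then show ?thesis by (rule LIMSEQ_le_const2) (use step in auto)
qed




lemma tuples_Suc: "tuples n (Suc p) = (\<lambda>(i, is). i # is) ` ({..<n} \<times> tuples n p)"
proof (intro equalityI subsetI)
  fix xs assume "xs \<in> tuples n (Suc p)"
  then obtain i js where "xs = i # js" "i < n" "js \<in> tuples n p"
    unfolding tuples_def by (cases xs) auto
  then show "xs \<in> (\<lambda>(i, is). i # is) ` ({..<n} \<times> tuples n p)" by force
qed (auto simp: tuples_def)

lemma finite_tuples: "finite (tuples n p)"
proof -
  have "tuples n p = {xs. set xs \<subseteq> {..<n} \<and> length xs = p}" unfolding tuples_def by auto
  then show ?thesis using finite_lists_length_eq[of "{..<n}" p] by simp
qed

lemma tuples_prod_sum: "(\<Sum>is\<in>tuples n p. \<Prod>j<p. f j (is ! j)) = (\<Prod>j<p. \<Sum>i<n. f j i :: real)"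
proof (induction p arbitrary: f)
  case 0
  have "tuples n 0 = {[]}" unfolding tuples_def by auto
  then show ?case by simp
next
  case (Suc p)
  have inj: "inj_on (\<lambda>(i, is). i # is) ({..<n} \<times> tuples n p)" by (auto simp: inj_on_def)
  have "(\<Sum>is\<in>tuples n (Suc p). \<Prod>j<Suc p. f j (is ! j))
      = (\<Sum>(i, is)\<in>{..<n} \<times> tuples n p. \<Prod>j<Suc p. f j ((i # is) ! j))"
    unfolding tuples_Suc by (subst sum.reindex[OF inj]) (simp add: case_prod_beta')
  also have "\<dots> = (\<Sum>(i, is)\<in>{..<n} \<times> tuples n p. f 0 i * (\<Prod>j<p. f (Suc j) (is ! j)))"
    by (intro sum.cong refl) (auto simp del: prod.lessThan_Suc simp add: prod.lessThan_Suc_shift)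
  also have "\<dots> = (\<Sum>i<n. \<Sum>is\<in>tuples n p. f 0 i * (\<Prod>j<p. f (Suc j) (is ! j)))"
    by (rule sum.cartesian_product[symmetric])
  also have "\<dots> = (\<Sum>i<n. f 0 i) * (\<Sum>is\<in>tuples n p. \<Prod>j<p. f (Suc j) (is ! j))"
    by (simp only: sum_product)
  also have "\<dots> = (\<Sum>i<n. f 0 i) * (\<Prod>j<p. \<Sum>i<n. f (Suc j) i)"
    using Suc.IH[of "\<lambda>j. f (Suc j)"] by simp
  also have "\<dots> = (\<Prod>j<Suc p. \<Sum>i<n. f j i)" by (simp only: prod.lessThan_Suc_shift)
  finally show ?case .
qed

lemma unit_sphere_abs_le: "x \<in> unit_sphere n \<Longrightarrow> \<bar>x i\<bar> \<le> 1"
proof -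
  assume x: "x \<in> unit_sphere n"
  show ?thesis
  proof (cases "i < n")
    case True
    have "(x i)\<^sup>2 \<le> (\<Sum>k<n. (x k)\<^sup>2)" using True by (intro member_le_sum) auto
    then have "(x i)\<^sup>2 \<le> 1" using x unfolding unit_sphere_def by simp
    then show ?thesis by (simp add: abs_square_le_1)
  next
    case False then show ?thesis using x unfolding unit_sphere_def by auto
  qed
qed

lemma unit_sphere_ip_le: "x \<in> unit_sphere n \<Longrightarrow> y \<in> unit_sphere n \<Longrightarrow> \<bar>\<Sum>i<n. x i * y i\<bar> \<le> 1"
proof -
  assume x: "x \<in> unit_sphere n" and y: "y \<in> unit_sphere n"
  have "\<bar>\<Sum>i<n. x i * y i\<bar> \<le> (\<Sum>i<n. \<bar>x i * y i\<bar>)" by (rule sum_abs)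
  also have "\<dots> \<le> (\<Sum>i<n. ((x i)\<^sup>2 + (y i)\<^sup>2) / 2)"
  proof (intro sum_mono)
    fix i
    have "0 \<le> (\<bar>x i\<bar> - \<bar>y i\<bar>)\<^sup>2" by simp
    then show "\<bar>x i * y i\<bar> \<le> ((x i)\<^sup>2 + (y i)\<^sup>2) / 2"
      by (simp add: power2_eq_square abs_mult algebra_simps)
  qed
  also have "\<dots> = ((\<Sum>i<n. (x i)\<^sup>2) + (\<Sum>i<n. (y i)\<^sup>2)) / 2"
    by (simp only: sum_divide_distrib[symmetric] sum.distrib)
  also have "\<dots> = 1" using x y unfolding unit_sphere_def by simp
  finally show ?thesis .
qed

lemma unit_sphere_ip_self: "x \<in> unit_sphere n \<Longrightarrow> (\<Sum>i<n. x i * x i) = 1"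
  unfolding unit_sphere_def by (simp add: power2_eq_square)

lemma prod_abs_le1: "(\<And>j. j \<in> A \<Longrightarrow> \<bar>a j\<bar> \<le> (1::real)) \<Longrightarrow> \<bar>\<Prod>j\<in>A. a j\<bar> \<le> 1"
  by (simp add: abs_prod prod_le_1)

lemma sum_le_prod_plus:
  fixes a :: "nat \<Rightarrow> real"
  assumes "\<And>j. j < Suc q \<Longrightarrow> \<bar>a j\<bar> \<le> 1"
  shows "(\<Sum>j<Suc q. a j) \<le> (\<Prod>j<Suc q. a j) + real q"
  using assms
proof (induction q)
  case 0 then show ?case by simp
next
  case (Suc q)
  have IH: "(\<Sum>j<Suc q. a j) \<le> (\<Prod>j<Suc q. a j) + real q" using Suc by simp
  have P: "\<bar>\<Prod>j<Suc q. a j\<bar> \<le> 1" using Suc.prems by (intro prod_abs_le1) simp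
  have aq: "\<bar>a (Suc q)\<bar> \<le> 1" using Suc.prems by simp
  let ?P = "\<Prod>j<Suc q. a j"
  have "0 \<le> (1 - ?P) * (1 - a (Suc q))" using P aq by (intro mult_nonneg_nonneg) (auto simp: abs_le_iff)
  then have "?P + a (Suc q) - 1 \<le> ?P * a (Suc q)" by (simp add: algebra_simps)
  then show ?case using IH by simp
qed

lemma prod_le_mean_pow:
  fixes a :: "nat \<Rightarrow> real"
  assumes p: "0 < p" "even p"
  shows "(\<Prod>j<p. a j) \<le> (\<Sum>j<p. (a j) ^ p) / real p"
proof -
  let ?y = "\<Prod>j<p. \<bar>a j\<bar>"
  have y0: "0 \<le> ?y" by (intro prod_nonneg) auto
  have am: "(\<Prod>j<p. \<bar>a j\<bar> ^ p) powr (1 / real (card {..<p})) \<le> (\<Sum>j<p. \<bar>a j\<bar> ^ p / real (card {..<p}))"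
    using p by (intro arith_geom_mean) auto
  have "(\<Prod>j<p. \<bar>a j\<bar> ^ p) = ?y ^ p" by (simp add: prod_power_distrib)
  also have "?y ^ p = ?y powr real p"
  proof (cases "?y = 0")
    case True show ?thesis unfolding True using p by simp
  next
    case False
    then have "0 < ?y" using y0 by linarith
    then show ?thesis by (simp add: powr_realpow)
  qed
  finally have "(\<Prod>j<p. \<bar>a j\<bar> ^ p) powr (1 / real p) = (?y powr real p) powr (1 / real p)" by simp
  also have "\<dots> = ?y powr (real p * (1 / real p))" by (rule powr_powr)
  also have "real p * (1 / real p) = 1" using p by simp
  finally have "(\<Prod>j<p. \<bar>a j\<bar> ^ p) powr (1 / real p) = ?y" using y0 by simp
  then have "?y \<le> (\<Sum>j<p. \<bar>a j\<bar> ^ p / real p)" using am by simp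
  also have "\<dots> = (\<Sum>j<p. (a j) ^ p) / real p"
    using p by (simp add: power_even_abs sum_divide_distrib)
  finally have "?y \<le> (\<Sum>j<p. (a j) ^ p) / real p" .
  moreover have "(\<Prod>j<p. a j) \<le> ?y"
    by (metis abs_ge_self abs_prod)
  ultimately show ?thesis by linarith
qed

lemma integral_exp_pos:
  fixes f :: "'a \<Rightarrow> real"
  assumes "prob_space M" "integrable M (\<lambda>x. exp (f x))"
  shows "0 < (\<integral>x. exp (f x) \<partial>M)"
proof -
  have nn: "0 \<le> (\<integral>x. exp (f x) \<partial>M)" by (rule Bochner_Integration.integral_nonneg) simp
  interpret prob_space M by fact
  show ?thesis
  proof (rule ccontr)
    assume "\<not> ?thesis"
    then have "(\<integral>x. exp (f x) \<partial>M) = 0" using nn by simp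
    then have "AE x in M. exp (f x) = 0"
      using integral_nonneg_eq_0_iff_AE[OF assms(2)] by auto
    then have "AE x in M. False" by simp
    then show False by simp
  qed
qed




theorem theorem1:
  fixes p n :: nat and S :: "nat \<Rightarrow> (nat \<Rightarrow> real) set" and c3l c3u :: real
  assumes "p > 0" and "even p"
    and "\<And>j. j < p \<Longrightarrow> S j \<subseteq> unit_sphere n"
    and "\<And>j. j < p \<Longrightarrow> S j \<noteq> {}"
    and "c3l > 0" and "c3u > 0"
  shows "xi_l p S n c3l \<le> xi p S n c3l \<and> xi p S n c3u \<le> xi_u p S n c3u"
proof -
  note p0 = assms(1) and pev = assms(2) and Ssub = assms(3) and Sne = assms(4)
  define T where "T = Pi\<^sub>E {..<p} S"
  have Tne: "T \<noteq> {}" unfolding T_def using Sne by (simp add: PiE_eq_empty_iff)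
  have mem: "xs j \<in> unit_sphere n" if "xs \<in> T" "j < p" for xs j
    using that Ssub unfolding T_def by (auto simp: PiE_iff)
  have ab: "\<bar>xs j i\<bar> \<le> 1" if "xs \<in> T" "j < p" for xs j i
    using unit_sphere_abs_le[OF mem[OF that]] .
  define ip where "ip = (\<lambda>x y :: nat \<Rightarrow> real. \<Sum>i<n. x i * y i)"
  have ipb: "\<bar>ip (s j) (r j)\<bar> \<le> 1" if "s \<in> T" "r \<in> T" "j < p" for s r j
    unfolding ip_def using unit_sphere_ip_le[OF mem[OF that(1,3)] mem[OF that(2,3)]] .
  have ips: "ip (s j) (s j) = 1" if "s \<in> T" "j < p" for s j
    unfolding ip_def using unit_sphere_ip_self[OF mem[OF that]] .
  define u1 where "u1 = (\<lambda>(xs :: nat \<Rightarrow> nat \<Rightarrow> real) (js :: nat list). \<Prod>j<p. xs j (js ! j))"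
  define v2 where "v2 = (\<lambda>(xs :: nat \<Rightarrow> nat \<Rightarrow> real) (z :: nat \<times> nat). xs (fst z) (snd z))"
  define u3 where "u3 = (\<lambda>(xs :: nat \<Rightarrow> nat \<Rightarrow> real) (z :: nat \<times> nat list). \<Prod>k<p. xs (fst z) (snd z ! k))"
  have bu1: "\<bar>u1 t js\<bar> \<le> 1" if "t \<in> T" "js \<in> tuples n p" for t js
    unfolding u1_def using ab[OF that(1)] by (intro prod_abs_le1) auto
  have bv2: "\<bar>v2 t z\<bar> \<le> 1" if "t \<in> T" "z \<in> {..<p} \<times> {..<n}" for t z
    unfolding v2_def using ab[OF that(1)] that(2) by auto
  have bu3: "\<bar>u3 t z\<bar> \<le> 1" if "t \<in> T" "z \<in> {..<p} \<times> tuples n p" for t z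
    unfolding u3_def using ab[OF that(1)] that(2) by (intro prod_abs_le1) auto
  have C1: "(\<Sum>js\<in>tuples n p. (c * u1 s js) * (c * u1 r js)) = c\<^sup>2 * (\<Prod>j<p. ip (s j) (r j))" for s r c
  proof -
    have "(\<Sum>js\<in>tuples n p. (c * u1 s js) * (c * u1 r js)) = c\<^sup>2 * (\<Sum>js\<in>tuples n p. \<Prod>j<p. s j (js ! j) * r j (js ! j))"
      unfolding u1_def by (simp add: prod.distrib sum_distrib_left power2_eq_square mult_ac)
    also have "\<dots> = c\<^sup>2 * (\<Prod>j<p. ip (s j) (r j))"
      unfolding ip_def using tuples_prod_sum[where n=n and p=p and f="\<lambda>j i. s j i * r j i"] by simp
    finally show ?thesis .
  qed
  have C2: "(\<Sum>z\<in>{..<p} \<times> {..<n}. (c * v2 s z) * (c * v2 r z)) = c\<^sup>2 * (\<Sum>j<p. ip (s j) (r j))" for s r c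
  proof -
    have "(\<Sum>z\<in>{..<p} \<times> {..<n}. (c * v2 s z) * (c * v2 r z)) = (\<Sum>j<p. \<Sum>i<n. (c * s j i) * (c * r j i))"
      unfolding v2_def by (subst sum.cartesian_product) (simp add: case_prod_beta')
    also have "\<dots> = c\<^sup>2 * (\<Sum>j<p. ip (s j) (r j))"
      unfolding ip_def by (simp add: sum_distrib_left power2_eq_square mult_ac)
    finally show ?thesis .
  qed
  have C3: "(\<Sum>z\<in>{..<p} \<times> tuples n p. (c * u3 s z) * (c * u3 r z)) = c\<^sup>2 * (\<Sum>j<p. (ip (s j) (r j)) ^ p)" for s r c
  proof -
    have inner: "(\<Sum>js\<in>tuples n p. (\<Prod>k<p. s j (js ! k)) * (\<Prod>k<p. r j (js ! k))) = (ip (s j) (r j)) ^ p" for j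
    proof -
      have "(\<Sum>js\<in>tuples n p. (\<Prod>k<p. s j (js ! k)) * (\<Prod>k<p. r j (js ! k)))
          = (\<Sum>js\<in>tuples n p. \<Prod>k<p. s j (js ! k) * r j (js ! k))"
        by (simp add: prod.distrib)
      also have "\<dots> = (\<Prod>k<p. \<Sum>i<n. s j i * r j i)"
        using tuples_prod_sum[where n=n and p=p and f="\<lambda>k i. s j i * r j i"] by simp
      also have "\<dots> = (ip (s j) (r j)) ^ p" unfolding ip_def by simp
      finally show ?thesis .
    qed
    have "(\<Sum>z\<in>{..<p} \<times> tuples n p. (c * u3 s z) * (c * u3 r z))
        = (\<Sum>j<p. \<Sum>js\<in>tuples n p. c\<^sup>2 * ((\<Prod>k<p. s j (js ! k)) * (\<Prod>k<p. r j (js ! k))))"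
      unfolding u3_def by (subst sum.cartesian_product) (simp add: case_prod_beta' power2_eq_square mult_ac)
    also have "\<dots> = c\<^sup>2 * (\<Sum>j<p. (ip (s j) (r j)) ^ p)"
      by (simp add: sum_distrib_left[symmetric] inner)
    finally show ?thesis .
  qed
  have finT: "finite (tuples n p)" by (rule finite_tuples)
  have eqphi: "phi p n S A = (SUP t\<in>T. \<Sum>js\<in>tuples n p. A js * u1 t js)" for A
    unfolding phi_def T_def u1_def ..
  have eqY: "(\<Sum>z\<in>{..<p} \<times> {..<n}. G z * v2 xs z) = (\<Sum>j<p. \<Sum>i<n. G (j, i) * xs j i)" for G xs
    unfolding v2_def by (simp add: sum.cartesian_product case_prod_beta')
  have eqB: "(\<Sum>z\<in>{..<p} \<times> tuples n p. B z * u3 xs z) = (\<Sum>j<p. \<Sum>js\<in>tuples n p. B (j, js) * (\<Prod>k<p. xs j (js ! k)))" for B xs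
    unfolding u3_def by (simp add: sum.cartesian_product case_prod_beta')
  obtain q where q: "p = Suc q" using p0 by (cases p) auto
  have upper: "xi p S n c3u \<le> xi_u p S n c3u"
  proof -
    let ?c = c3u
    have c: "0 < ?c" by (rule assms(6))
    let ?a = "?c\<^sup>2 * (real p - 1)"
    have cmp: "exp (?a/2) * (\<integral>x. exp (?c * (SUP t\<in>T. \<Sum>js\<in>tuples n p. x js * u1 t js)) \<partial>gauss (tuples n p))
       \<le> (\<integral>y. exp (?c * (SUP t\<in>T. \<Sum>z\<in>{..<p} \<times> {..<n}. y z * v2 t z)) \<partial>gauss ({..<p} \<times> {..<n}))"
    proof (rule comparison_sup[where R=1])
      show "finite (tuples n p)" by (rule finT)
      show "finite ({..<p} \<times> {..<n})" by simp
      show "T \<noteq> {}" by (rule Tne)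
      show "\<And>t i. t \<in> T \<Longrightarrow> i \<in> tuples n p \<Longrightarrow> \<bar>u1 t i\<bar> \<le> 1" by (rule bu1)
      show "\<And>t j. t \<in> T \<Longrightarrow> j \<in> {..<p} \<times> {..<n} \<Longrightarrow> \<bar>v2 t j\<bar> \<le> 1" by (rule bv2)
      show "0 \<le> ?c" "0 \<le> ?c" using c by auto
      fix s r assume sr: "s \<in> T" "r \<in> T"
      have "(\<Sum>j<Suc q. ip (s j) (r j)) \<le> (\<Prod>j<Suc q. ip (s j) (r j)) + real q"
        using ipb[OF sr] q by (intro sum_le_prod_plus) auto
      then have "?c\<^sup>2 * (\<Sum>j<p. ip (s j) (r j)) \<le> ?c\<^sup>2 * ((\<Prod>j<p. ip (s j) (r j)) + (real p - 1))"
        using q by (intro mult_left_mono) auto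
      then show "(\<Sum>z\<in>{..<p} \<times> {..<n}. (?c * v2 s z) * (?c * v2 r z)) \<le> (\<Sum>js\<in>tuples n p. (?c * u1 s js) * (?c * u1 r js)) + ?a"
        unfolding C1 C2 by (simp add: algebra_simps)
    next
      fix s assume s: "s \<in> T"
      have "(\<Sum>j<p. ip (s j) (s j)) = real p" using ips[OF s] by simp
      moreover have "(\<Prod>j<p. ip (s j) (s j)) = 1" using ips[OF s] by simp
      ultimately show "(\<Sum>z\<in>{..<p} \<times> {..<n}. (?c * v2 s z) * (?c * v2 s z)) = (\<Sum>js\<in>tuples n p. (?c * u1 s js) * (?c * u1 s js)) + ?a"
        unfolding C1 C2 by (simp add: algebra_simps)
    qed
    let ?E1 = "\<integral>x. exp (?c * phi p n S x) \<partial>gauss (tuples n p)"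
    let ?E2 = "\<integral>y. exp (?c * (SUP xs\<in>Pi\<^sub>E {..<p} S. \<Sum>j<p. \<Sum>i<n. y (j, i) * xs j i)) \<partial>gauss ({..<p} \<times> {..<n})"
    have cmp2: "exp (?a/2) * ?E1 \<le> ?E2"
      using cmp unfolding eqphi eqY T_def .
    have int1: "integrable (gauss (tuples n p)) (\<lambda>x. exp (?c * phi p n S x))"
      unfolding eqphi using sup_integral_approx(1)[OF finT Tne _, of u1 1 ?c] bu1 c by auto
    have E1: "0 < ?E1" by (rule integral_exp_pos[OF prob_gauss int1])
    have E2: "0 < ?E2" using cmp2 E1 by (smt (verit) exp_gt_zero mult_pos_pos)
    have "ln (exp (?a/2) * ?E1) \<le> ln ?E2" using cmp2 E1 E2 by simp
    then have l: "?a/2 + ln ?E1 \<le> ln ?E2" using E1 by (simp add: ln_mult)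
    have "1 / ?c * ln ?E1 \<le> - ?c / 2 * (real p - 1) + 1 / ?c * ln ?E2"
    proof -
      have "1 / ?c * (?a/2 + ln ?E1) \<le> 1 / ?c * ln ?E2" using l c by (intro mult_left_mono) auto
      moreover have "1 / ?c * (?a/2) = ?c / 2 * (real p - 1)" using c by (simp add: power2_eq_square field_simps)
      ultimately show ?thesis by (simp add: distrib_left)
    qed
    then show ?thesis unfolding xi_def xi_u_def by (intro mult_left_mono) auto
  qed
  have lower: "xi_l p S n c3l \<le> xi p S n c3l"
  proof -
    let ?c = c3l
    have c: "0 < ?c" by (rule assms(5))
    let ?c1 = "?c / sqrt (real p)"
    have sp: "0 < sqrt (real p)" using p0 by simp
    have c1sq: "?c1\<^sup>2 = ?c\<^sup>2 / real p" using p0 by (simp add: power_divide)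
    have cmp: "exp (0/2) * (\<integral>x. exp (?c1 * (SUP t\<in>T. \<Sum>z\<in>{..<p} \<times> tuples n p. x z * u3 t z)) \<partial>gauss ({..<p} \<times> tuples n p))
       \<le> (\<integral>y. exp (?c * (SUP t\<in>T. \<Sum>js\<in>tuples n p. y js * u1 t js)) \<partial>gauss (tuples n p))"
    proof (rule comparison_sup[where R=1])
      show "finite ({..<p} \<times> tuples n p)" using finT by simp
      show "finite (tuples n p)" by (rule finT)
      show "T \<noteq> {}" by (rule Tne)
      show "\<And>t i. t \<in> T \<Longrightarrow> i \<in> {..<p} \<times> tuples n p \<Longrightarrow> \<bar>u3 t i\<bar> \<le> 1" by (rule bu3)
      show "\<And>t j. t \<in> T \<Longrightarrow> j \<in> tuples n p \<Longrightarrow> \<bar>u1 t j\<bar> \<le> 1" by (rule bu1)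
      show "0 \<le> ?c1" "0 \<le> ?c" using c sp by auto
      fix s r assume sr: "s \<in> T" "r \<in> T"
      have "(\<Prod>j<p. ip (s j) (r j)) \<le> (\<Sum>j<p. (ip (s j) (r j)) ^ p) / real p"
        by (rule prod_le_mean_pow[OF p0 pev])
      then have "?c\<^sup>2 * (\<Prod>j<p. ip (s j) (r j)) \<le> ?c\<^sup>2 * ((\<Sum>j<p. (ip (s j) (r j)) ^ p) / real p)"
        by (intro mult_left_mono) auto
      then show "(\<Sum>js\<in>tuples n p. (?c * u1 s js) * (?c * u1 r js)) \<le> (\<Sum>z\<in>{..<p} \<times> tuples n p. (?c1 * u3 s z) * (?c1 * u3 r z)) + 0"
        unfolding C1 C3 c1sq by simp
    next
      fix s assume s: "s \<in> T"
      have "(\<Sum>j<p. (ip (s j) (s j)) ^ p) = real p" using ips[OF s] by simp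
      moreover have "(\<Prod>j<p. ip (s j) (s j)) = 1" using ips[OF s] by simp
      ultimately show "(\<Sum>js\<in>tuples n p. (?c * u1 s js) * (?c * u1 s js)) = (\<Sum>z\<in>{..<p} \<times> tuples n p. (?c1 * u3 s z) * (?c1 * u3 s z)) + 0"
        unfolding C1 C3 c1sq using p0 by simp
    qed
    let ?E1 = "\<integral>x. exp (?c * phi p n S x) \<partial>gauss (tuples n p)"
    let ?El = "\<integral>B. exp (?c / sqrt (real p) * (SUP xs\<in>Pi\<^sub>E {..<p} S. \<Sum>j<p. \<Sum>js\<in>tuples n p. B (j, js) * (\<Prod>k<p. xs j (js ! k)))) \<partial>gauss ({..<p} \<times> tuples n p)"
    have cmp2: "?El \<le> ?E1"
      using cmp unfolding eqphi eqB T_def by simp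
    have intl: "integrable (gauss ({..<p} \<times> tuples n p)) (\<lambda>x. exp (?c1 * (SUP t\<in>T. \<Sum>z\<in>{..<p} \<times> tuples n p. x z * u3 t z)))"
      using sup_integral_approx(1)[of "{..<p} \<times> tuples n p" T u3 1 ?c1] finT Tne bu3 c sp by auto
    have El: "0 < ?El"
      using integral_exp_pos[OF prob_gauss intl] unfolding eqB T_def .
    have "ln ?El \<le> ln ?E1" using cmp2 El by simp
    then have "1 / ?c * ln ?El \<le> 1 / ?c * ln ?E1" using c by (intro mult_left_mono) auto
    then show ?thesis unfolding xi_def xi_l_def by (rule mult_left_mono) simp
  qed
  show ?thesis using upper lower by simp
qed


end
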